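(* Let $F$ be a global function field with full constant field $\mathbb{F}_q$, with $n\ge1$ rational places $P_1,\dots,P_n$ and class number $h$; fix an integer $m\ge1$. Let $r\ge s\ge0$ be integers and let $x_1,\dots,x_m\ge0$ be real numbers with $x_1+\cdots+x_m\le1$ such that $|\mathcal{V}_m(r,s;\lfloor x_1n\rfloor,\dots,\lfloor x_mn\rfloor)|<h$. Let $G$ be a divisor of $F$ of degree $r$ with ${\rm supp}(G)\cap\{P_1,\dots,P_n\}=\emptyset$ such that for every $f\in\mathcal{L}(G)\setminus\{0\}$, if $E=(f)_0$ satisfies $j_\ell(E)\le2\lfloor x_\ell n\rfloor+\sum_{\nu=\ell+1}^m\lfloor x_\nu n\rfloor$ for $1\le\ell\le m$ and $J_m(E)\le2\sum_{\ell=1}^m(\ell+1)\lfloor x_\ell n\rfloor$, then $\deg(\overline E)\le s-1$. Assume that $|\mathcal{L}(G)|\cdot|M(x_1,\dots,x_m;\mathbf{0})|>q^{mn}$ and that $(m+1)n\ge s+2\sum_{l=1}^m(l+1)\lfloor x_ln\rfloor$. Let $\mathbf{c}\in\mathbb{F}_q^{mn}$ be such that $N_{\mathbf c}=\{f\in\mathcal{L}(G):\Phi(f)\in M(x_1,\dots,x_m;\mathbf c)\}$ satisfies $|N_{\mathbf c}|\ge|\mathcal{L}(G)|\cdot|M(x_1,\dots,x_m;\mathbf 0)|/q^{mn}$, and let $C=\psi(N_{\mathbf c})\subseteq\mathbb{F}_q^n$. Then $$|C|\ge\Bigl\lceil\frac{|\mathcal{L}(G)|\cdot|M(x_1,\dots,x_m;\mathbf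 0)|}{q^{mn}}\Bigr\rceil\quad\text{and}\quad d(C)\ge(m+1)n+1-s-2\sum_{l=1}^m(l+1)\lfloor x_ln\rfloor.$$
   Context: $v_P$ is the normalized valuation at a place $P$, $v_P(D)$ the coefficient of $P$ in a divisor $D$, $\mathcal{L}(G)=\{f\in F: f=0\text{ or } v_P(f)\ge-v_P(G)\ \forall P\}$, $(f)_0$ the zero divisor of $f$. For a positive divisor $D$: $\overline D=\sum_{i=1}^n\min(m+1,v_{P_i}(D))P_i$; $j_\ell(D)=|\{i: v_{P_i}(D)=m-\ell\}|$ for $0\le\ell\le m$; $J_m(D)=\sum_{\ell=1}^m(\ell+1)j_\ell(D)$. For integers $r\ge s\ge0$ and integers $X_1,\dots,X_m\ge0$, $\mathcal{V}_m(r,s;X_1,\dots,X_m)$ is the set of positive divisors $D$ of $F$ with $\deg D=r$, $\deg\overline D\ge s$, $j_\ell(D)\le2X_\ell+\sum_{\nu=\ell+1}^mX_\nu$ for $1\le\ell\le m$, and $J_m(D)\le2\sum_{\ell=1}^m(\ell+1)X_\ell$. For $\boldsymbol\alpha=(\alpha^{(1)}_1,\dots,\alpha^{(1)}_m,\dots,\alpha^{(n)}_1,\dots,\alpha^{(n)}_m)\in\mathbb{F}_q^{mn}$ and $1\le\ell\le m$, $I_\ell(\boldsymbol\alpha)=\{i\in\{1,\dots,n\}:\alpha^{(i)}_m=\cdots=\alpha^{(i)}_{\ell+1}=0,\ \alpha^{(i)}_\ell\ne0\}$. For $\mathbf c\in\mathbb{F}_q^{mn}$, $M(x_1,\dots,x_m;\mathbf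 c)=\{\boldsymbol\alpha\in\mathbb{F}_q^{mn}:|I_\ell(\boldsymbol\alpha-\mathbf c)|\le\lfloor x_\ell n\rfloor\ \text{for }1\le\ell\le m\}$. For each $i$ let $t_i$ be a local parameter at $P_i$; each $f\in\mathcal{L}(G)$ has a local expansion $f=\sum_{l\ge0}f^{(l)}(P_i)t_i^l$ with $f^{(l)}(P_i)\in\mathbb{F}_q$. $\Phi:\mathcal{L}(G)\to\mathbb{F}_q^{mn}$, $\Phi(f)=(\phi_1(f),\dots,\phi_n(f))$ with $\phi_i(f)=(f^{(m-1)}(P_i),\dots,f^{(1)}(P_i),f^{(0)}(P_i))$; $\psi:\mathcal{L}(G)\to\mathbb{F}_q^n$, $\psi(f)=(f^{(m)}(P_1),\dots,f^{(m)}(P_n))$. $d(C)$ is the minimum Hamming distance of $C$. *)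

theory Defs
  imports "HOL-Computational_Algebra.Polynomial" "HOL-Library.Extended_Nat"
begin

text \<open>Setting: the function field F is the whole type 'a (a field); the constant
field F_q is a finite subfield K of it.  Places are represented by their
normalized discrete valuations v :: 'a \<Rightarrow> int (with the convention v 0 = 0;
0 is never evaluated meaningfully).\<close>

definition is_subfield :: "'a::field set \<Rightarrow> bool" where
  "is_subfield K \<longleftrightarrow> 0 \<in> K \<and> 1 \<in> K \<and>
     (\<forall>a\<in>K. \<forall>b\<in>K. a + b \<in> K \<and> a * b \<in> K \<and> - a \<in> K) \<and>
     (\<forall>a\<in>K. a \<noteq> 0 \<longrightarrow> inverse a \<in> K)"

definition algebraic_over :: "'a::field set \<Rightarrow> 'a \<Rightarrow> bool" where
  "algebraic_over K a \<longleftrightarrow> (\<exists>p. p \<noteq> 0 \<and> set (coeffs p) \<subseteq> K \<and> poly p a = 0)"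

definition rat_fun_field :: "'a::field set \<Rightarrow> 'a \<Rightarrow> 'a set" where
  "rat_fun_field K x = {poly a x / poly b x | a b.
      set (coeffs a) \<subseteq> K \<and> set (coeffs b) \<subseteq> K \<and> poly b x \<noteq> 0}"

definition global_function_field :: "'a::field set \<Rightarrow> bool" where
  "global_function_field K \<longleftrightarrow> finite K \<and> is_subfield K \<and>
     (\<exists>x. \<not> algebraic_over K x \<and>
        (\<exists>bs::'a list. \<forall>f. \<exists>cs. length cs = length bs \<and>
            set cs \<subseteq> rat_fun_field K x \<and> f = sum_list (map2 (*) cs bs))) \<and>
     (\<forall>a. algebraic_over K a \<longrightarrow> a \<in> K)"

definition normalized_valuation :: "'a::field set \<Rightarrow> ('a \<Rightarrow> int) \<Rightarrow> bool" where
  "normalized_valuation K v \<longleftrightarrow> v 0 = 0 \<and>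
     (\<forall>a b. a \<noteq> 0 \<longrightarrow> b \<noteq> 0 \<longrightarrow> v (a * b) = v a + v b) \<and>
     (\<forall>a b. a \<noteq> 0 \<longrightarrow> b \<noteq> 0 \<longrightarrow> a + b \<noteq> 0 \<longrightarrow> v (a + b) \<ge> min (v a) (v b)) \<and>
     (\<forall>a\<in>K. a \<noteq> 0 \<longrightarrow> v a = 0) \<and>
     (\<exists>z. z \<noteq> 0 \<and> v z = 1)"

definition in_valring :: "('a::field \<Rightarrow> int) \<Rightarrow> 'a \<Rightarrow> bool" where
  "in_valring v f \<longleftrightarrow> f = 0 \<or> v f \<ge> 0"

definition in_maxideal :: "('a::field \<Rightarrow> int) \<Rightarrow> 'a \<Rightarrow> bool" where
  "in_maxideal v f \<longleftrightarrow> f = 0 \<or> v f > 0"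

text \<open>Degree of a place: dimension of the residue field O_P/P over K
(minimal size of a K-spanning family of O_P modulo P).\<close>
definition place_degree :: "'a::field set \<Rightarrow> ('a \<Rightarrow> int) \<Rightarrow> nat" where
  "place_degree K v = (LEAST d. \<exists>bs. length bs = d \<and> (\<forall>b\<in>set bs. in_valring v b) \<and>
      (\<forall>f. in_valring v f \<longrightarrow> (\<exists>cs. length cs = d \<and> set cs \<subseteq> K \<and>
            in_maxideal v (f - sum_list (map2 (*) cs bs)))))"

definition rational_place :: "'a::field set \<Rightarrow> ('a \<Rightarrow> int) \<Rightarrow> bool" where
  "rational_place K v \<longleftrightarrow> normalized_valuation K v \<and> place_degree K v = 1"

definition is_divisor :: "'a::field set \<Rightarrow> (('a \<Rightarrow> int) \<Rightarrow> int) \<Rightarrow> bool" where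
  "is_divisor K D \<longleftrightarrow> finite {P. D P \<noteq> 0} \<and> (\<forall>P. D P \<noteq> 0 \<longrightarrow> normalized_valuation K P)"

definition div_deg :: "'a::field set \<Rightarrow> (('a \<Rightarrow> int) \<Rightarrow> int) \<Rightarrow> int" where
  "div_deg K D = (\<Sum>P\<in>{P. D P \<noteq> 0}. int (place_degree K P) * D P)"

definition positive_divisor :: "'a::field set \<Rightarrow> (('a \<Rightarrow> int) \<Rightarrow> int) \<Rightarrow> bool" where
  "positive_divisor K D \<longleftrightarrow> is_divisor K D \<and> (\<forall>P. D P \<ge> 0)"

definition principal_divisor :: "'a::field set \<Rightarrow> 'a \<Rightarrow> (('a \<Rightarrow> int) \<Rightarrow> int)" where
  "principal_divisor K f = (\<lambda>P. if normalized_valuation K P then P f else 0)"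

definition zero_divisor :: "'a::field set \<Rightarrow> 'a \<Rightarrow> (('a \<Rightarrow> int) \<Rightarrow> int)" where
  "zero_divisor K f = (\<lambda>P. if normalized_valuation K P then max 0 (P f) else 0)"

definition RR_space :: "'a::field set \<Rightarrow> (('a \<Rightarrow> int) \<Rightarrow> int) \<Rightarrow> 'a set" where
  "RR_space K G = {f. f = 0 \<or> (\<forall>P. normalized_valuation K P \<longrightarrow> P f \<ge> - G P)}"

definition class_number :: "'a::field set \<Rightarrow> nat" where
  "class_number K = card ({D. is_divisor K D \<and> div_deg K D = 0} //
      {(D, D'). is_divisor K D \<and> is_divisor K D' \<and> div_deg K D = 0 \<and> div_deg K D' = 0 \<and>
         (\<exists>f. f \<noteq> 0 \<and> (\<lambda>P. D P - D' P) = principal_divisor K f)})"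

definition div_bar :: "(nat \<Rightarrow> ('a \<Rightarrow> int)) \<Rightarrow> nat \<Rightarrow> nat \<Rightarrow> (('a \<Rightarrow> int) \<Rightarrow> int)
    \<Rightarrow> (('a \<Rightarrow> int) \<Rightarrow> int)" where
  "div_bar Pl n m D = (\<lambda>Q. if \<exists>i\<in>{1..n}. Q = Pl i then min (int m + 1) (D Q) else 0)"

definition j_ell :: "(nat \<Rightarrow> ('a \<Rightarrow> int)) \<Rightarrow> nat \<Rightarrow> nat \<Rightarrow> nat \<Rightarrow> (('a \<Rightarrow> int) \<Rightarrow> int) \<Rightarrow> nat" where
  "j_ell Pl n m l D = card {i\<in>{1..n}. D (Pl i) = int m - int l}"

definition J_m :: "(nat \<Rightarrow> ('a \<Rightarrow> int)) \<Rightarrow> nat \<Rightarrow> nat \<Rightarrow> (('a \<Rightarrow> int) \<Rightarrow> int) \<Rightarrow> nat" where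
  "J_m Pl n m D = (\<Sum>l=1..m. (l + 1) * j_ell Pl n m l D)"

definition V_set :: "'a::field set \<Rightarrow> (nat \<Rightarrow> ('a \<Rightarrow> int)) \<Rightarrow> nat \<Rightarrow> nat \<Rightarrow> nat \<Rightarrow> nat
    \<Rightarrow> (nat \<Rightarrow> nat) \<Rightarrow> (('a \<Rightarrow> int) \<Rightarrow> int) set" where
  "V_set K Pl n m r s X = {D. positive_divisor K D \<and> div_deg K D = int r \<and>
      div_deg K (div_bar Pl n m D) \<ge> int s \<and>
      (\<forall>l\<in>{1..m}. j_ell Pl n m l D \<le> 2 * X l + (\<Sum>\<nu>=l+1..m. X \<nu>)) \<and>
      J_m Pl n m D \<le> 2 * (\<Sum>l=1..m. (l + 1) * X l)}"

text \<open>Local expansions at a rational place v with local parameter t: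
f = \<Sum>_l f^(l) t^l.  The residue of f is the unique constant a \<in> K with
f - a \<in> P.\<close>
definition residue :: "'a::field set \<Rightarrow> ('a \<Rightarrow> int) \<Rightarrow> 'a \<Rightarrow> 'a" where
  "residue K v f = (THE a. a \<in> K \<and> in_maxideal v (f - a))"

primrec loc_coeff :: "'a::field set \<Rightarrow> ('a \<Rightarrow> int) \<Rightarrow> 'a \<Rightarrow> 'a \<Rightarrow> nat \<Rightarrow> 'a" where
  "loc_coeff K v t f 0 = residue K v f"
| "loc_coeff K v t f (Suc l) = loc_coeff K v t ((f - residue K v f) / t) l"

text \<open>Vectors of F_q^{mn}: alpha i k = alpha^{(i)}_k, i \<in> {1..n}, k \<in> {1..m}
(zero outside).\<close>
definition vecs :: "'a::field set \<Rightarrow> nat \<Rightarrow> nat \<Rightarrow> (nat \<Rightarrow> nat \<Rightarrow> 'a) set" where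
  "vecs K n m = {\<alpha>. (\<forall>i k. \<alpha> i k \<in> K) \<and>
      (\<forall>i k. \<not> (i \<in> {1..n} \<and> k \<in> {1..m}) \<longrightarrow> \<alpha> i k = 0)}"

definition I_ell :: "nat \<Rightarrow> nat \<Rightarrow> nat \<Rightarrow> (nat \<Rightarrow> nat \<Rightarrow> 'a::field) \<Rightarrow> nat set" where
  "I_ell n m l \<alpha> = {i\<in>{1..n}. (\<forall>k\<in>{l+1..m}. \<alpha> i k = 0) \<and> \<alpha> i l \<noteq> 0}"

definition M_set :: "'a::field set \<Rightarrow> nat \<Rightarrow> nat \<Rightarrow> (nat \<Rightarrow> real) \<Rightarrow> (nat \<Rightarrow> nat \<Rightarrow> 'a)
    \<Rightarrow> (nat \<Rightarrow> nat \<Rightarrow> 'a) set" where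
  "M_set K n m x c = {\<alpha>\<in>vecs K n m. \<forall>l\<in>{1..m}.
      int (card (I_ell n m l (\<lambda>i k. \<alpha> i k - c i k))) \<le> \<lfloor>x l * real n\<rfloor>}"

definition Phi :: "'a::field set \<Rightarrow> (nat \<Rightarrow> ('a \<Rightarrow> int)) \<Rightarrow> (nat \<Rightarrow> 'a) \<Rightarrow> nat \<Rightarrow> nat \<Rightarrow> 'a
    \<Rightarrow> (nat \<Rightarrow> nat \<Rightarrow> 'a)" where
  "Phi K Pl t n m f = (\<lambda>i k. if i \<in> {1..n} \<and> k \<in> {1..m}
      then loc_coeff K (Pl i) (t i) f (m - k) else 0)"

definition psi :: "'a::field set \<Rightarrow> (nat \<Rightarrow> ('a \<Rightarrow> int)) \<Rightarrow> (nat \<Rightarrow> 'a) \<Rightarrow> nat \<Rightarrow> nat \<Rightarrow> 'a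
    \<Rightarrow> (nat \<Rightarrow> 'a)" where
  "psi K Pl t n m f = (\<lambda>i. if i \<in> {1..n} then loc_coeff K (Pl i) (t i) f m else 0)"

definition hamming :: "nat \<Rightarrow> (nat \<Rightarrow> 'a) \<Rightarrow> (nat \<Rightarrow> 'a) \<Rightarrow> nat" where
  "hamming n u v = card {i\<in>{1..n}. u i \<noteq> v i}"

text \<open>Minimum distance (\<infinity> if the code has fewer than two words).\<close>
definition min_dist :: "nat \<Rightarrow> (nat \<Rightarrow> 'a) set \<Rightarrow> enat" where
  "min_dist n C = (INF p\<in>{(u, v). u \<in> C \<and> v \<in> C \<and> u \<noteq> v}. enat (hamming n (fst p) (snd p)))"

definition flx :: "(nat \<Rightarrow> real) \<Rightarrow> nat \<Rightarrow> nat \<Rightarrow> nat" where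
  "flx x n l = nat \<lfloor>x l * real n\<rfloor>"

end

theory Submission
  imports Defs
begin

locale nval =
  fixes K :: "'a::field set" and v :: "'a \<Rightarrow> int"
  assumes sf: "is_subfield K" and nv: "normalized_valuation K v"
begin

lemma v0: "v 0 = 0" using nv unfolding normalized_valuation_def by blast
lemma vmult: "a \<noteq> 0 \<Longrightarrow> b \<noteq> 0 \<Longrightarrow> v (a * b) = v a + v b"
  using nv unfolding normalized_valuation_def by blast
lemma vadd: "a \<noteq> 0 \<Longrightarrow> b \<noteq> 0 \<Longrightarrow> a + b \<noteq> 0 \<Longrightarrow> v (a + b) \<ge> min (v a) (v b)"
  using nv unfolding normalized_valuation_def by blast
lemma vK: "a \<in> K \<Longrightarrow> a \<noteq> 0 \<Longrightarrow> v a = 0"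
  using nv unfolding normalized_valuation_def by blast
lemma vz: "\<exists>z. z \<noteq> 0 \<and> v z = 1"
  using nv unfolding normalized_valuation_def by blast

lemma K0: "0 \<in> K" and K1: "1 \<in> K" using sf unfolding is_subfield_def by auto
lemma Kadd: "a \<in> K \<Longrightarrow> b \<in> K \<Longrightarrow> a + b \<in> K" using sf unfolding is_subfield_def by auto
lemma Kmult: "a \<in> K \<Longrightarrow> b \<in> K \<Longrightarrow> a * b \<in> K" using sf unfolding is_subfield_def by auto
lemma Kneg: "a \<in> K \<Longrightarrow> - a \<in> K" using sf unfolding is_subfield_def by auto
lemma Kinv: "a \<in> K \<Longrightarrow> inverse a \<in> K"
  using sf unfolding is_subfield_def by (cases "a = 0") auto
lemma Kdiff: "a \<in> K \<Longrightarrow> b \<in> K \<Longrightarrow> a - b \<in> K"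
  using Kadd Kneg by (metis diff_conv_add_uminus)
lemma Kdiv: "a \<in> K \<Longrightarrow> b \<in> K \<Longrightarrow> a / b \<in> K"
  using Kmult Kinv by (simp add: divide_inverse)

lemma v1: "v 1 = 0" using vmult[of 1 1] by simp
lemma vneg1: "v (-1) = 0" using vmult[of "-1" "-1"] v1 by simp
lemma vneg: "v (- a) = v a"
  using vmult[of "-1" a] vneg1 v0 by (cases "a = 0") auto
lemma vinv: "a \<noteq> 0 \<Longrightarrow> v (inverse a) = - v a"
  using vmult[of a "inverse a"] v1 by simp
lemma vdiv: "a \<noteq> 0 \<Longrightarrow> b \<noteq> 0 \<Longrightarrow> v (a / b) = v a - v b"
  by (simp add: divide_inverse vmult vinv)
lemma vsub: "a \<noteq> 0 \<Longrightarrow> b \<noteq> 0 \<Longrightarrow> a - b \<noteq> 0 \<Longrightarrow> v (a - b) \<ge> min (v a) (v b)"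
  using vadd[of a "-b"] vneg by simp
lemma vpow: "a \<noteq> 0 \<Longrightarrow> v (a ^ k) = int k * v a"
  by (induction k) (auto simp: v1 vmult algebra_simps)

lemma strict: assumes "a \<noteq> 0" "b \<noteq> 0" "v a < v b"
  shows "a + b \<noteq> 0 \<and> v (a + b) = v a"
proof -
  have ne: "a + b \<noteq> 0"
  proof
    assume "a + b = 0" then have "b = - a" by (simp add: add.commute eq_neg_iff_add_eq_0)
    then show False using assms vneg by simp
  qed
  have "v (a + b) \<ge> v a" using vadd[OF assms(1,2) ne] assms by simp
  moreover have "v a \<ge> min (v (a + b)) (v b)" using vsub[of "a+b" b] ne assms by simp
  ultimately show ?thesis using ne assms by linarith
qed

definition VR where "VR f \<longleftrightarrow> in_valring v f"
definition MI where "MI f \<longleftrightarrow> in_maxideal v f"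

lemma MI_VR: "in_maxideal v a \<Longrightarrow> in_valring v a"
  unfolding in_maxideal_def in_valring_def by auto

lemma VR_add: assumes "in_valring v a" "in_valring v b" shows "in_valring v (a + b)"
proof (cases "a = 0 \<or> b = 0 \<or> a + b = 0")
  case True then show ?thesis using assms by (auto simp: in_valring_def)
next
  case False then have "v (a + b) \<ge> min (v a) (v b)" using vadd by blast
  then show ?thesis using assms False by (simp add: in_valring_def)
qed
lemma VR_neg: "in_valring v a \<Longrightarrow> in_valring v (- a)"
  unfolding in_valring_def using vneg by auto
lemma VR_diff: "in_valring v a \<Longrightarrow> in_valring v b \<Longrightarrow> in_valring v (a - b)"
  using VR_add VR_neg by (metis diff_conv_add_uminus)
lemma VR_mult: assumes "in_valring v a" "in_valring v b" shows "in_valring v (a * b)"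
proof (cases "a = 0 \<or> b = 0")
  case True then show ?thesis using assms by (auto simp: in_valring_def)
next
  case False then show ?thesis using assms vmult[of a b] by (simp add: in_valring_def)
qed
lemma VR_K: "a \<in> K \<Longrightarrow> in_valring v a"
  using vK[of a] unfolding in_valring_def by (cases "a = 0") auto
lemma MI0: "in_maxideal v 0" by (simp add: in_maxideal_def)
lemma VR0: "in_valring v 0" by (simp add: in_valring_def)
lemma MI_add: assumes "in_maxideal v a" "in_maxideal v b" shows "in_maxideal v (a + b)"
proof (cases "a = 0 \<or> b = 0 \<or> a + b = 0")
  case True then show ?thesis using assms by (auto simp: in_maxideal_def)
next
  case False then have "v (a + b) \<ge> min (v a) (v b)" using vadd by blast
  then show ?thesis using assms False by (simp add: in_maxideal_def)
qed
lemma MI_neg: "in_maxideal v a \<Longrightarrow> in_maxideal v (- a)"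
  unfolding in_maxideal_def using vneg by auto
lemma MI_diff: "in_maxideal v a \<Longrightarrow> in_maxideal v b \<Longrightarrow> in_maxideal v (a - b)"
  using MI_add MI_neg by (metis diff_conv_add_uminus)
lemma MI_mult: assumes "in_valring v a" "in_maxideal v b" shows "in_maxideal v (a * b)"
proof (cases "a = 0 \<or> b = 0")
  case True then show ?thesis using assms by (auto simp: in_maxideal_def)
next
  case False then show ?thesis using assms vmult[of a b] by (simp add: in_maxideal_def in_valring_def)
qed
lemma MI_sum: "finite A \<Longrightarrow> (\<And>i. i \<in> A \<Longrightarrow> in_maxideal v (f i)) \<Longrightarrow> in_maxideal v (\<Sum>i\<in>A. f i)"
  by (induction A rule: finite_induct) (simp_all add: MI_add MI0)
lemma VR_sum: "finite A \<Longrightarrow> (\<And>i. i \<in> A \<Longrightarrow> in_valring v (f i)) \<Longrightarrow> in_valring v (\<Sum>i\<in>A. f i)"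
  by (induction A rule: finite_induct) (simp_all add: VR_add VR0)
lemma K_not_MI: "a \<in> K \<Longrightarrow> a \<noteq> 0 \<Longrightarrow> \<not> in_maxideal v a"
  unfolding in_maxideal_def using vK by auto
lemma K_sum: "finite A \<Longrightarrow> (\<And>i. i \<in> A \<Longrightarrow> f i \<in> K) \<Longrightarrow> (\<Sum>i\<in>A. f i) \<in> K"
  by (induction A rule: finite_induct) (auto simp: Kadd K0)

lemma sum_gt: "finite A \<Longrightarrow> (\<And>i. i \<in> A \<Longrightarrow> f i = 0 \<or> v (f i) > mu) \<Longrightarrow>
   (\<Sum>i\<in>A. f i) = 0 \<or> v (\<Sum>i\<in>A. f i) > mu"
proof (induction A rule: finite_induct)
  case (insert x F)
  then have a: "f x = 0 \<or> v (f x) > mu" and b: "sum f F = 0 \<or> v (sum f F) > mu" by auto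
  show ?case
  proof (cases "f x = 0 \<or> sum f F = 0 \<or> f x + sum f F = 0")
    case True then show ?thesis using insert(1,2) a b by auto
  next
    case False then have "v (f x + sum f F) \<ge> min (v (f x)) (v (sum f F))" using vadd by blast
    then show ?thesis using insert(1,2) a b False by auto
  qed
qed auto

lemma distinct_vals_nonzero:
  assumes "finite A" "A \<noteq> {}" "\<And>i. i \<in> A \<Longrightarrow> f i \<noteq> 0"
    "\<And>i j. i \<in> A \<Longrightarrow> j \<in> A \<Longrightarrow> i \<noteq> j \<Longrightarrow> v (f i) \<noteq> v (f j)"
  shows "(\<Sum>i\<in>A. f i) \<noteq> 0"
proof -
  obtain i0 where i0: "i0 \<in> A" "\<forall>j\<in>A. v (f i0) \<le> v (f j)"
  proof -
    obtain y where "y \<in> v ` f ` A" "\<forall>z\<in>v ` f ` A. y \<le> z"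
      using assms(1,2) by (metis Min_in Min_le finite_imageI image_is_empty)
    then show ?thesis using that by auto
  qed
  have r: "(\<Sum>i\<in>A-{i0}. f i) = 0 \<or> v (\<Sum>i\<in>A-{i0}. f i) > v (f i0)"
    apply (rule sum_gt) using assms(1) apply simp
    using i0 assms(4) by (metis DiffD1 DiffD2 insertCI order_le_less)
  have "(\<Sum>i\<in>A. f i) = f i0 + (\<Sum>i\<in>A-{i0}. f i)" using i0(1) assms(1) by (simp add: sum.remove)
  then show ?thesis
  proof (cases "(\<Sum>i\<in>A-{i0}. f i) = 0")
    case True then show ?thesis using r assms(3) i0(1) \<open>sum f A = _\<close> by simp
  next
    case False then show ?thesis using r strict[of "f i0" "(\<Sum>i\<in>A-{i0}. f i)"] assms(3) i0(1) \<open>sum f A = _\<close> by simp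
  qed
qed

end

lemma sf0: "is_subfield L \<Longrightarrow> 0 \<in> L" and sf1: "is_subfield L \<Longrightarrow> 1 \<in> L"
  unfolding is_subfield_def by auto
lemma sfadd: "is_subfield L \<Longrightarrow> a \<in> L \<Longrightarrow> b \<in> L \<Longrightarrow> a + b \<in> L"
  unfolding is_subfield_def by auto
lemma sfmult: "is_subfield L \<Longrightarrow> a \<in> L \<Longrightarrow> b \<in> L \<Longrightarrow> a * b \<in> L"
  unfolding is_subfield_def by auto
lemma sfneg: "is_subfield L \<Longrightarrow> a \<in> L \<Longrightarrow> - a \<in> L"
  unfolding is_subfield_def by auto
lemma sfinv: "is_subfield L \<Longrightarrow> a \<in> L \<Longrightarrow> inverse a \<in> L"
  unfolding is_subfield_def by (cases "a = 0") auto
lemma sfdiff: "is_subfield L \<Longrightarrow> a \<in> L \<Longrightarrow> b \<in> L \<Longrightarrow> a - b \<in> L"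
  using sfadd sfneg by (metis diff_conv_add_uminus)
lemma sfdiv: "is_subfield L \<Longrightarrow> a \<in> L \<Longrightarrow> b \<in> L \<Longrightarrow> a / b \<in> L"
  by (simp add: divide_inverse sfmult sfinv)
lemma sfsum: assumes "is_subfield L" shows "finite A \<Longrightarrow> (\<And>i. i \<in> A \<Longrightarrow> f i \<in> L) \<Longrightarrow> (\<Sum>i\<in>A. f i) \<in> L"
  by (induction A rule: finite_induct) (auto simp: sfadd sf0 assms)
lemma sfpow: "is_subfield L \<Longrightarrow> a \<in> L \<Longrightarrow> a ^ k \<in> L"
  by (induction k) (auto simp: sfmult sf1)

lemma sum_ind: assumes "finite I" "i \<in> I"
  shows "(\<Sum>j\<in>I. (if j = i then 1 else 0) * (f j :: 'a::field)) = f i"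
proof -
  have "(\<Sum>j\<in>I. (if j = i then 1 else 0) * f j) = (\<Sum>j\<in>I. if j = i then f j else 0)"
    by (rule sum.cong) auto
  then show ?thesis using assms by simp
qed

definition spn :: "'a::field set \<Rightarrow> ('i \<Rightarrow> 'a) \<Rightarrow> 'i set \<Rightarrow> 'a set" where
  "spn L B I = {y. \<exists>c. (\<forall>i\<in>I. c i \<in> L) \<and> y = (\<Sum>i\<in>I. c i * B i)}"

lemma spn0: "is_subfield L \<Longrightarrow> 0 \<in> spn L B I"
  unfolding spn_def by (rule CollectI, rule exI[of _ "\<lambda>_. 0"]) (simp add: sf0)
lemma spn_add: "a \<in> spn L B I \<Longrightarrow> b \<in> spn L B I \<Longrightarrow> is_subfield L \<Longrightarrow> a + b \<in> spn L B I"
proof -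
  assume "a \<in> spn L B I" "b \<in> spn L B I" "is_subfield L"
  then obtain c d where "\<forall>i\<in>I. c i \<in> L" "a = (\<Sum>i\<in>I. c i * B i)" "\<forall>i\<in>I. d i \<in> L" "b = (\<Sum>i\<in>I. d i * B i)"
    unfolding spn_def by auto
  then show ?thesis unfolding spn_def
    by (intro CollectI exI[of _ "\<lambda>i. c i + d i"]) (auto simp: sfadd \<open>is_subfield L\<close> sum.distrib algebra_simps)
qed
lemma spn_smult: "a \<in> spn L B I \<Longrightarrow> k \<in> L \<Longrightarrow> is_subfield L \<Longrightarrow> k * a \<in> spn L B I"
proof -
  assume "a \<in> spn L B I" "k \<in> L" "is_subfield L"
  then obtain c where "\<forall>i\<in>I. c i \<in> L" "a = (\<Sum>i\<in>I. c i * B i)"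
    unfolding spn_def by auto
  then show ?thesis unfolding spn_def
    by (intro CollectI exI[of _ "\<lambda>i. k * c i"]) (auto simp: sfmult \<open>is_subfield L\<close> \<open>k \<in> L\<close> sum_distrib_left algebra_simps)
qed
lemma spn_neg: "a \<in> spn L B I \<Longrightarrow> is_subfield L \<Longrightarrow> - a \<in> spn L B I"
  using spn_smult[of a L B I "-1"] sfneg sf1 by fastforce
lemma spn_diff: "a \<in> spn L B I \<Longrightarrow> b \<in> spn L B I \<Longrightarrow> is_subfield L \<Longrightarrow> a - b \<in> spn L B I"
  using spn_add spn_neg by (metis diff_conv_add_uminus)
lemma spn_sum: assumes "is_subfield L" shows "finite A \<Longrightarrow> (\<And>j. j \<in> A \<Longrightarrow> f j \<in> spn L B I) \<Longrightarrow> (\<Sum>j\<in>A. f j) \<in> spn L B I"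
  by (induction A rule: finite_induct) (auto simp: spn_add spn0 assms)
lemma spn_basis: "is_subfield L \<Longrightarrow> finite I \<Longrightarrow> i \<in> I \<Longrightarrow> B i \<in> spn L B I"
  unfolding spn_def
  by (intro CollectI exI[of _ "\<lambda>j. if j = i then 1 else 0"]) (auto simp: sf0 sf1 sum_ind)

lemma steinitz:
  assumes L: "is_subfield L" and I: "finite I"
  shows "finite J \<Longrightarrow> card J > card I \<Longrightarrow> (\<forall>j\<in>J. y j \<in> spn L B I) \<Longrightarrow>
     \<exists>c. (\<forall>j\<in>J. c j \<in> L) \<and> (\<exists>j\<in>J. c j \<noteq> 0) \<and> (\<Sum>j\<in>J. c j * y j) = 0"
  using I
proof (induction I arbitrary: J y rule: finite_induct)
  case empty
  then obtain j0 where j0: "j0 \<in> J" by fastforce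
  have "y j0 = 0" using empty j0 by (auto simp: spn_def)
  then show ?case using j0 empty(1)
    by (intro exI[of _ "\<lambda>j. if j = j0 then 1 else 0"]) (auto simp: sf0 sf1 L sum_ind)
next
  case (insert b I)
  have "\<forall>j\<in>J. \<exists>cc. (\<forall>i\<in>insert b I. cc i \<in> L) \<and> y j = (\<Sum>i\<in>insert b I. cc i * B i)"
    using insert.prems(3) by (auto simp: spn_def)
  then obtain cc where cc: "\<And>j i. j \<in> J \<Longrightarrow> i \<in> insert b I \<Longrightarrow> cc j i \<in> L"
     "\<And>j. j \<in> J \<Longrightarrow> y j = (\<Sum>i\<in>insert b I. cc j i * B i)" by metis
  define a where "a j = cc j b" for j
  define s where "s j = (\<Sum>i\<in>I. cc j i * B i)" for j
  have ys: "y j = a j * B b + s j" if "j \<in> J" for j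
    using cc(2)[OF that] insert(1,2) by (simp add: a_def s_def)
  have sI: "s j \<in> spn L B I" if "j \<in> J" for j
    unfolding spn_def s_def using cc(1)[OF that] by auto
  have aL: "a j \<in> L" if "j \<in> J" for j using cc(1)[OF that] by (simp add: a_def)
  have cardI: "card (insert b I) = Suc (card I)" using insert(1,2) by simp
  show ?case
  proof (cases "\<forall>j\<in>J. a j = 0")
    case True
    then have "\<forall>j\<in>J. y j \<in> spn L B I" using ys sI by auto
    then show ?thesis using insert.IH[of J y] insert.prems cardI by auto
  next
    case False
    then obtain j0 where j0: "j0 \<in> J" "a j0 \<noteq> 0" by auto
    define y' where "y' j = y j - (a j / a j0) * y j0" for j
    define J' where "J' = J - {j0}"
    have y's: "y' j \<in> spn L B I" if "j \<in> J'" for j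
    proof -
      have "y' j = s j - (a j / a j0) * s j0"
        using ys[of j] ys[of j0] that j0 unfolding y'_def J'_def by (simp add: field_simps)
      moreover have "(a j / a j0) * s j0 \<in> spn L B I"
        using spn_smult[OF sI[OF j0(1)] sfdiv[OF L aL aL] L] that j0 unfolding J'_def by auto
      ultimately show ?thesis using spn_diff[OF sI _ L] that unfolding J'_def by auto
    qed
    have cJ': "card J' > card I" using insert.prems(1,2) j0 cardI unfolding J'_def by simp
    obtain c' where c': "\<forall>j\<in>J'. c' j \<in> L" "\<exists>j\<in>J'. c' j \<noteq> 0" "(\<Sum>j\<in>J'. c' j * y' j) = 0"
      using insert.IH[of J' y'] insert.prems(1) cJ' y's unfolding J'_def by auto
    define c where "c j = (if j = j0 then - (\<Sum>j\<in>J'. c' j * (a j / a j0)) else c' j)" for j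
    have fJ': "finite J'" using insert.prems(1) by (simp add: J'_def)
    have "(\<Sum>j\<in>J'. c' j * y' j) = (\<Sum>j\<in>J'. c' j * y j) - (\<Sum>j\<in>J'. c' j * (a j / a j0)) * y j0"
      unfolding y'_def by (simp add: right_diff_distrib sum_subtractf sum_distrib_right mult.assoc mult.left_commute)
    moreover have "(\<Sum>j\<in>J. c j * y j) = c j0 * y j0 + (\<Sum>j\<in>J'. c j * y j)"
      using insert.prems(1) j0(1) unfolding J'_def by (simp add: sum.remove)
    moreover have "(\<Sum>j\<in>J'. c j * y j) = (\<Sum>j\<in>J'. c' j * y j)"
      by (rule sum.cong) (auto simp: c_def J'_def)
    ultimately have "(\<Sum>j\<in>J. c j * y j) = 0" using c'(3) by (simp add: c_def)
    moreover have "\<forall>j\<in>J. c j \<in> L"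
    proof
      fix j assume "j \<in> J"
      show "c j \<in> L"
      proof (cases "j = j0")
        case True
        have "(\<Sum>j\<in>J'. c' j * (a j / a j0)) \<in> L"
          using sfsum[OF L fJ'] c'(1) aL j0 sfmult[OF L] sfdiv[OF L] unfolding J'_def by auto
        then show ?thesis using True sfneg[OF L] by (simp add: c_def)
      next
        case False then show ?thesis using c'(1) \<open>j \<in> J\<close> by (simp add: c_def J'_def)
      qed
    qed
    moreover have "\<exists>j\<in>J. c j \<noteq> 0" using c'(2) by (auto simp: c_def J'_def)
    ultimately show ?thesis by blast
  qed
qed


definition Kpoly :: "'a::field set \<Rightarrow> 'a poly \<Rightarrow> bool" where
  "Kpoly K p \<longleftrightarrow> (\<forall>i. coeff p i \<in> K)"

lemma Kpoly_coeffs: assumes "0 \<in> K" shows "set (coeffs p) \<subseteq> K \<longleftrightarrow> Kpoly K p"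
proof
  assume "set (coeffs p) \<subseteq> K"
  then show "Kpoly K p" unfolding Kpoly_def
    using coeff_in_coeffs[of p] assms by (metis coeff_eq_0 coeff_0 leI subset_iff)
next
  assume "Kpoly K p" then show "set (coeffs p) \<subseteq> K"
    unfolding Kpoly_def coeffs_def by auto
qed

context fixes K :: "'a::field set" assumes sfK: "is_subfield K"
begin

lemma Kpoly_add: "Kpoly K p \<Longrightarrow> Kpoly K q \<Longrightarrow> Kpoly K (p + q)"
  unfolding Kpoly_def using sfadd[OF sfK] by simp
lemma Kpoly_neg: "Kpoly K p \<Longrightarrow> Kpoly K (- p)"
  unfolding Kpoly_def using sfneg[OF sfK] by simp
lemma Kpoly_mult: "Kpoly K p \<Longrightarrow> Kpoly K q \<Longrightarrow> Kpoly K (p * q)"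
  unfolding Kpoly_def coeff_mult by (auto intro!: sfsum[OF sfK] sfmult[OF sfK])
lemma Kpoly_const: "a \<in> K \<Longrightarrow> Kpoly K [:a:]"
  unfolding Kpoly_def using sf0[OF sfK] by (simp add: coeff_pCons split: nat.split)
lemma Kpoly_X: "Kpoly K [:0, 1:]"
  unfolding Kpoly_def using sf0[OF sfK] sf1[OF sfK] by (simp add: coeff_pCons split: nat.split)
lemma Kpoly_0: "Kpoly K 0" unfolding Kpoly_def using sf0[OF sfK] by simp
lemma Kpoly_1: "Kpoly K 1" using Kpoly_const[OF sf1[OF sfK]] by (simp add: one_pCons)

lemma poly_in_subfield: assumes "is_subfield L" "K \<subseteq> L" "Kpoly K p" "y \<in> L"
  shows "poly p y \<in> L"
  unfolding poly_altdef
  by (rule sfsum[OF assms(1)]) (use assms in \<open>auto intro!: sfmult[OF assms(1)] sfpow[OF assms(1)] simp: Kpoly_def\<close>)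

lemma rff_iff: "z \<in> rat_fun_field K x \<longleftrightarrow> (\<exists>a b. Kpoly K a \<and> Kpoly K b \<and> poly b x \<noteq> 0 \<and> z = poly a x / poly b x)"
  unfolding rat_fun_field_def using Kpoly_coeffs[OF sf0[OF sfK]] by auto

lemma rff_subfield: "is_subfield (rat_fun_field K x)"
proof -
  have z: "0 \<in> rat_fun_field K x" unfolding rff_iff
    by (rule exI[of _ 0], rule exI[of _ 1]) (simp add: Kpoly_0 Kpoly_1)
  have o: "1 \<in> rat_fun_field K x" unfolding rff_iff
    by (rule exI[of _ 1], rule exI[of _ 1]) (simp add: Kpoly_1)
  have ad: "a + b \<in> rat_fun_field K x \<and> a * b \<in> rat_fun_field K x \<and> - a \<in> rat_fun_field K x"
    if ab: "a \<in> rat_fun_field K x" "b \<in> rat_fun_field K x" for a b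
  proof -
    obtain p1 q1 where h1: "Kpoly K p1" "Kpoly K q1" "poly q1 x \<noteq> 0" "a = poly p1 x / poly q1 x"
      using ab(1) unfolding rff_iff by blast
    obtain p2 q2 where h2: "Kpoly K p2" "Kpoly K q2" "poly q2 x \<noteq> 0" "b = poly p2 x / poly q2 x"
      using ab(2) unfolding rff_iff by blast
    note h = h1 h2
    have "a + b = poly (p1 * q2 + p2 * q1) x / poly (q1 * q2) x"
      using h(3,7) unfolding h(4,8) by (simp add: field_simps)
    then have 1: "a + b \<in> rat_fun_field K x" unfolding rff_iff
      by (intro exI[of _ "p1 * q2 + p2 * q1"] exI[of _ "q1 * q2"]) (use h in \<open>simp add: Kpoly_add Kpoly_mult\<close>)
    have "a * b = poly (p1 * p2) x / poly (q1 * q2) x" using h by simp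
    then have 2: "a * b \<in> rat_fun_field K x" unfolding rff_iff
      by (intro exI[of _ "p1 * p2"] exI[of _ "q1 * q2"]) (use h in \<open>simp add: Kpoly_add Kpoly_mult\<close>)
    have "- a = poly (- p1) x / poly q1 x" using h by simp
    then have 3: "- a \<in> rat_fun_field K x" unfolding rff_iff
      by (intro exI[of _ "- p1"] exI[of _ "q1"]) (use h in \<open>simp add: Kpoly_neg\<close>)
    show ?thesis using 1 2 3 by blast
  qed
  have iv: "inverse a \<in> rat_fun_field K x" if ab: "a \<in> rat_fun_field K x" for a
  proof -
    obtain p1 q1 where h: "Kpoly K p1" "Kpoly K q1" "poly q1 x \<noteq> 0" "a = poly p1 x / poly q1 x"
      using ab unfolding rff_iff by blast
    show ?thesis
    proof (cases "poly p1 x = 0")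
      case True then show ?thesis using h z by simp
    next
      case False then show ?thesis unfolding rff_iff using h
        by (intro exI[of _ q1] exI[of _ p1]) simp
    qed
  qed
  show ?thesis unfolding is_subfield_def using z o ad iv by blast
qed

lemma K_sub_rff: "K \<subseteq> rat_fun_field K x"
proof
  fix a assume "a \<in> K" then show "a \<in> rat_fun_field K x" unfolding rff_iff
    by (intro exI[of _ "[:a:]"] exI[of _ 1]) (simp add: Kpoly_const Kpoly_1)
qed
lemma x_in_rff: "x \<in> rat_fun_field K x" unfolding rff_iff
  by (intro exI[of _ "[:0,1:]"] exI[of _ 1]) (simp add: Kpoly_X Kpoly_1)

lemma rff_sub_S:
  assumes L: "is_subfield L" and KL: "K \<subseteq> L" and e: "e \<ge> 1"
    and cj: "\<forall>j<e. cj j \<in> L" and rel: "x ^ e = (\<Sum>j<e. cj j * x ^ j)"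
  shows "rat_fun_field K x \<subseteq> spn L (\<lambda>j. x ^ j) {..<e}"
proof -
  let ?S = "spn L (\<lambda>j. x ^ j) {..<e}"
  have pS: "x ^ j \<in> ?S" if "j \<le> e" for j
  proof (cases "j = e")
    case True
    then show ?thesis using rel cj unfolding spn_def by auto
  next
    case False then show ?thesis using that spn_basis[OF L, of "{..<e}" j "\<lambda>j. x ^ j"] by simp
  qed
  have xS: "x * s \<in> ?S" if sS: "s \<in> ?S" for s
  proof -
    obtain d where d: "\<forall>j\<in>{..<e}. d j \<in> L" "s = (\<Sum>j<e. d j * x ^ j)" using sS unfolding spn_def by auto
    have "x * s = (\<Sum>j<e. d j * x ^ Suc j)" using d(2) by (simp add: sum_distrib_left algebra_simps)
    also have "\<dots> \<in> ?S"
    proof (rule spn_sum[OF L], simp)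
      fix j assume "j \<in> {..<e}"
      then have "x ^ Suc j \<in> ?S" using pS[of "Suc j"] by (simp del: power_Suc)
      then show "d j * x ^ Suc j \<in> ?S" using d(1) spn_smult[OF _ _ L] \<open>j \<in> {..<e}\<close> by blast
    qed
    finally show ?thesis .
  qed
  have powS: "x ^ k \<in> ?S" for k
  proof (induction k)
    case 0 then show ?case using pS[of 0] by simp
  next
    case (Suc k) then show ?case using xS by simp
  qed
  have mulxS: "s * x ^ k \<in> ?S" if "s \<in> ?S" for s k
  proof (induction k)
    case 0 then show ?case using that by simp
  next
    case (Suc k) then show ?case using xS[of "s * x ^ k"] by (simp add: algebra_simps)
  qed
  have mulS: "s * t \<in> ?S" if st: "s \<in> ?S" "t \<in> ?S" for s t
  proof -
    from st(2) obtain d where d: "\<forall>j\<in>{..<e}. d j \<in> L" "t = (\<Sum>j<e. d j * x ^ j)" unfolding spn_def by blast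
    have "s * t = (\<Sum>j<e. d j * (s * x ^ j))" using d(2) by (simp add: sum_distrib_left algebra_simps)
    also have "\<dots> \<in> ?S"
      by (rule spn_sum[OF L], simp) (use d(1) in \<open>auto intro!: spn_smult[OF _ _ L] mulxS[OF st(1)]\<close>)
    finally show ?thesis .
  qed
  have powS2: "s ^ k \<in> ?S" if "s \<in> ?S" for s k
  proof (induction k)
    case 0 then show ?case using powS[of 0] by simp
  next
    case (Suc k) then show ?case using mulS[OF that] by simp
  qed
  have polyS: "poly p x \<in> ?S" if "Kpoly K p" for p
    unfolding poly_altdef
    by (rule spn_sum[OF L], simp) (use that KL in \<open>auto intro!: spn_smult[OF _ _ L] powS simp: Kpoly_def\<close>)
  have invS: "inverse s \<in> ?S" if sn: "s \<in> ?S" "s \<noteq> 0" for s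
  proof -
    obtain c where c: "\<forall>k\<in>{..e}. c k \<in> L" "\<exists>k\<in>{..e}. c k \<noteq> 0" "(\<Sum>k\<in>{..e}. c k * s ^ k) = 0"
      using steinitz[OF L, of "{..<e}" "{..e}" "\<lambda>k. s ^ k" "\<lambda>j. x ^ j"] powS2[OF sn(1)] by auto
    define k0 where "k0 = (LEAST k. k \<le> e \<and> c k \<noteq> 0)"
    have k0: "k0 \<le> e" "c k0 \<noteq> 0" "\<And>k. k < k0 \<Longrightarrow> c k = 0"
      using LeastI_ex[of "\<lambda>k. k \<le> e \<and> c k \<noteq> 0"] c(2) not_less_Least[of _ "\<lambda>k. k \<le> e \<and> c k \<noteq> 0"]
      unfolding k0_def
    proof -
      show "(LEAST k. k \<le> e \<and> c k \<noteq> 0) \<le> e" "c (LEAST k. k \<le> e \<and> c k \<noteq> 0) \<noteq> 0"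
        using LeastI_ex[of "\<lambda>k. k \<le> e \<and> c k \<noteq> 0"] c(2) by auto
      fix k assume "k < (LEAST k. k \<le> e \<and> c k \<noteq> 0)"
      then show "c k = 0" using not_less_Least[of k "\<lambda>k. k \<le> e \<and> c k \<noteq> 0"]
          \<open>(LEAST k. k \<le> e \<and> c k \<noteq> 0) \<le> e\<close> by simp
    qed
    define R where "R = (\<Sum>k\<in>{k0<..e}. c k * s ^ (k - k0 - 1))"
    have "(\<Sum>k\<in>{..e}. c k * s ^ k) = (\<Sum>k\<in>{k0..e}. c k * s ^ k)"
      by (rule sum.mono_neutral_right) (use k0 in auto)
    also have "\<dots> = c k0 * s ^ k0 + (\<Sum>k\<in>{k0<..e}. c k * s ^ k)"
      using k0(1) by (simp add: sum.atLeast_Suc_atMost greaterThanAtMost_def atLeastSucAtMost_greaterThanAtMost)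
    also have "(\<Sum>k\<in>{k0<..e}. c k * s ^ k) = s ^ k0 * s * R"
      unfolding R_def sum_distrib_left
    proof (rule sum.cong)
      fix k assume "k \<in> {k0<..e}"
      then obtain m where "k = Suc (k0 + m)" "m = k - k0 - 1" by (metis Suc_diff_Suc add_Suc_right diff_Suc_1 greaterThanAtMost_iff le_add_diff_inverse less_imp_le_nat)
      then have "s ^ k = s ^ Suc (k0 + m)" by simp
      also have "\<dots> = s ^ k0 * s * s ^ m" by (simp add: power_add algebra_simps)
      finally have "s ^ k = s ^ k0 * s * s ^ (k - k0 - 1)" using \<open>m = _\<close> by simp
      then show "c k * s ^ k = s ^ k0 * s * (c k * s ^ (k - k0 - 1))" by (simp add: algebra_simps)
    qed simp
    finally have "s ^ k0 * (c k0 + s * R) = 0" using c(3) by (simp add: algebra_simps)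
    then have eq: "c k0 + s * R = 0" using sn(2) by simp
    have RS: "R \<in> ?S" unfolding R_def
      by (rule spn_sum[OF L], simp) (use c(1) in \<open>auto intro!: spn_smult[OF _ _ L] powS2[OF sn(1)]\<close>)
    have "inverse s = - R / c k0"
    proof (rule inverse_unique)
      have "s * R = - c k0" using eq by (simp add: eq_neg_iff_add_eq_0 add.commute)
      then show "s * (- R / c k0) = 1" using k0(2) by (simp add: minus_divide_left[symmetric])
    qed
    then show ?thesis using spn_smult[OF RS _ L, of "- inverse (c k0)"] c(1) k0 sfneg[OF L] sfinv[OF L]
      by (simp add: divide_inverse mult.commute)
  qed
  show ?thesis
  proof
    fix z assume "z \<in> rat_fun_field K x"
    then obtain a b where h: "Kpoly K a" "Kpoly K b" "poly b x \<noteq> 0" "z = poly a x / poly b x"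
      unfolding rff_iff by blast
    show "z \<in> ?S" using h polyS invS mulS by (simp add: divide_inverse)
  qed
qed

end

lemma list_sum2: "length cs = length bs \<Longrightarrow> sum_list (map2 (*) cs bs) = (\<Sum>i<length bs. cs ! i * bs ! i)"
  by (simp add: sum_list_sum_nth atLeast0LessThan)

lemma spn_trans:
  assumes L: "is_subfield L" and I: "finite I" and J: "finite J"
    and ph: "\<forall>k\<in>I. ph k \<in> spn L (\<lambda>j. x ^ j) J"
  shows "(\<Sum>k\<in>I. ph k * b k) \<in> spn L (\<lambda>(k, j). x ^ j * b k) (I \<times> J)"
proof (rule spn_sum[OF L I])
  fix k assume k: "k \<in> I"
  obtain d where d: "\<forall>j\<in>J. d j \<in> L" "ph k = (\<Sum>j\<in>J. d j * x ^ j)" using ph k unfolding spn_def by blast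
  have "ph k * b k = (\<Sum>j\<in>J. d j * (x ^ j * b k))" using d(2) by (simp add: sum_distrib_right mult.assoc)
  also have "\<dots> \<in> spn L (\<lambda>(k, j). x ^ j * b k) (I \<times> J)"
  proof (rule spn_sum[OF L J])
    fix j assume "j \<in> J"
    then have "x ^ j * b k \<in> spn L (\<lambda>(k, j). x ^ j * b k) (I \<times> J)"
      using spn_basis[OF L _, of "I \<times> J" "(k, j)" "\<lambda>(k, j). x ^ j * b k"] I J k by simp
    then show "d j * (x ^ j * b k) \<in> spn L (\<lambda>(k, j). x ^ j * b k) (I \<times> J)"
      using spn_smult[OF _ _ L] d(1) \<open>j \<in> J\<close> by blast
  qed
  finally show "ph k * b k \<in> spn L (\<lambda>(k, j). x ^ j * b k) (I \<times> J)" .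
qed

context nval
begin

lemma VR_pow: "in_valring v a \<Longrightarrow> in_valring v (a ^ k)"
  by (induction k) (auto intro: VR_mult VR_K K1)
lemma MI_pow: "in_maxideal v a \<Longrightarrow> k \<ge> 1 \<Longrightarrow> in_maxideal v (a ^ k)"
proof (induction k)
  case (Suc k) then show ?case
    by (cases "k = 0") (auto intro: MI_mult[of "a ^ k" a, simplified mult.commute] VR_pow MI_VR simp: mult.commute)
qed simp

lemma poly_VR: "in_valring v w \<Longrightarrow> Kpoly K p \<Longrightarrow> in_valring v (poly p w)"
  unfolding poly_altdef by (rule VR_sum) (auto intro!: VR_mult VR_pow simp: Kpoly_def VR_K)

lemma poly_res: assumes "in_maxideal v w" "Kpoly K p"
  shows "in_maxideal v (poly p w - coeff p 0)"
proof -
  obtain c q where p: "p = pCons c q" by (metis pCons_cases)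
  have "Kpoly K q" using assms(2) unfolding p Kpoly_def by (metis coeff_pCons_Suc)
  then have "in_valring v (poly q w)" using poly_VR MI_VR assms(1) by blast
  then show ?thesis unfolding p using MI_mult[of "poly q w" w] assms(1) by (simp add: mult.commute)
qed

lemma poly_factor: assumes "Kpoly K p" "p \<noteq> 0"
  shows "\<exists>k p1. Kpoly K p1 \<and> coeff p1 0 \<noteq> 0 \<and> poly p w = w ^ k * poly p1 w"
  using assms
proof (induction p rule: pCons_induct)
  case (pCons a p)
  show ?case
  proof (cases "a = 0")
    case False then show ?thesis using pCons.prems by (intro exI[of _ 0] exI[of _ "pCons a p"]) simp
  next
    case True
    then have "p \<noteq> 0" using pCons by auto
    moreover have "Kpoly K p" using pCons.prems(1) unfolding Kpoly_def by (metis coeff_pCons_Suc)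
    ultimately obtain k p1 where "Kpoly K p1" "coeff p1 0 \<noteq> 0" "poly p w = w ^ k * poly p1 w"
      using pCons.IH by blast
    then show ?thesis using True by (intro exI[of _ "Suc k"] exI[of _ p1]) simp
  qed
qed simp

lemma unit_poly: assumes "in_maxideal v w" "Kpoly K p" "coeff p 0 \<noteq> 0"
  shows "poly p w \<noteq> 0 \<and> v (poly p w) = 0"
proof -
  have m: "in_maxideal v (poly p w - coeff p 0)" using poly_res assms by blast
  have c: "coeff p 0 \<in> K" using assms(2) Kpoly_def by blast
  have "\<not> in_maxideal v (poly p w)"
  proof
    assume "in_maxideal v (poly p w)"
    then have "in_maxideal v (poly p w - (poly p w - coeff p 0))" using m MI_diff by blast
    then show False using K_not_MI c assms(3) by simp
  qed
  moreover have "in_valring v (poly p w)" using poly_VR MI_VR assms by blast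
  ultimately show ?thesis unfolding in_maxideal_def in_valring_def by auto
qed

lemma rff_res: assumes w: "in_maxideal v w" "w \<noteq> 0" and y: "y \<in> rat_fun_field K w" "in_valring v y"
  shows "\<exists>a\<in>K. in_maxideal v (y - a)"
proof -
  obtain a b where h: "Kpoly K a" "Kpoly K b" "poly b w \<noteq> 0" "y = poly a w / poly b w"
    using y(1) rff_iff[OF sf] by blast
  show ?thesis
  proof (cases "a = 0")
    case True then show ?thesis using h K0 by (intro bexI[of _ 0]) (auto simp: MI0)
  next
    case False
    have "b \<noteq> 0" using h(3) by auto
    obtain k a1 where a1: "Kpoly K a1" "coeff a1 0 \<noteq> 0" "poly a w = w ^ k * poly a1 w"
      using poly_factor[OF h(1) False] by blast
    obtain l b1 where b1: "Kpoly K b1" "coeff b1 0 \<noteq> 0" "poly b w = w ^ l * poly b1 w"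
      using poly_factor[OF h(2) \<open>b \<noteq> 0\<close>] by blast
    have ua: "poly a1 w \<noteq> 0" "v (poly a1 w) = 0" using unit_poly[OF w(1) a1(1,2)] by auto
    have ub: "poly b1 w \<noteq> 0" "v (poly b1 w) = 0" using unit_poly[OF w(1) b1(1,2)] by auto
    have vw: "v w > 0" using w unfolding in_maxideal_def by auto
    have yne: "y \<noteq> 0" using h a1(3) ua w(2) by simp
    have vy: "v y = (int k - int l) * v w"
      using h(4) a1(3) b1(3) ua ub w(2) by (simp add: vdiv vmult vpow algebra_simps)
    have "v y \<ge> 0" using y(2) yne unfolding in_valring_def by auto
    then have kl: "k \<ge> l" using vy vw by (simp add: zero_le_mult_iff)
    show ?thesis
    proof (cases "k = l")
      case False
      then have "v y > 0" using vy vw kl by simp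
      then show ?thesis using K0 by (intro bexI[of _ 0]) (auto simp: in_maxideal_def)
    next
      case True
      have yq: "y = poly a1 w / poly b1 w" using h(4) a1(3) b1(3) True w(2) by simp
      define c0 where "c0 = coeff a1 0" define d0 where "d0 = coeff b1 0"
      have c0K: "c0 \<in> K" "d0 \<in> K" using a1(1) b1(1) unfolding c0_def d0_def Kpoly_def by auto
      have ma: "in_maxideal v (poly a1 w - c0)" and mb: "in_maxideal v (poly b1 w - d0)"
        using poly_res w(1) a1(1) b1(1) unfolding c0_def d0_def by auto
      have d0: "d0 \<noteq> 0" using b1(2) d0_def by simp
      have "y - c0 / d0 = (poly a1 w * d0 - c0 * poly b1 w) * inverse (poly b1 w * d0)"
        using yq ub(1) d0 by (simp add: field_simps)
      also have "poly a1 w * d0 - c0 * poly b1 w = d0 * (poly a1 w - c0) - c0 * (poly b1 w - d0)"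
        by (simp add: algebra_simps)
      finally have eq: "y - c0 / d0 = inverse (poly b1 w * d0) * (d0 * (poly a1 w - c0) - c0 * (poly b1 w - d0))"
        by (simp add: mult.commute)
      have "in_valring v (inverse (poly b1 w * d0))"
        using ub d0 c0K vinv vmult vK unfolding in_valring_def by simp
      moreover have "in_maxideal v (d0 * (poly a1 w - c0) - c0 * (poly b1 w - d0))"
        using MI_diff MI_mult VR_K c0K ma mb by blast
      ultimately have "in_maxideal v (y - c0 / d0)" using eq MI_mult by simp
      then show ?thesis using Kdiv c0K by blast
    qed
  qed
qed

end

context nval
begin

definition spanprop where
  "spanprop \<longleftrightarrow> (\<exists>L B (I::(nat \<times> nat) set). is_subfield L \<and> K \<subseteq> L \<and> finite I \<and> (\<forall>f. f \<in> spn L B I) \<and>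
     (\<forall>y\<in>L. in_valring v y \<longrightarrow> (\<exists>a\<in>K. in_maxideal v (y - a))))"

lemma from_w:
  fixes N :: nat
  assumes Fspan: "\<forall>f. \<exists>ph. (\<forall>k<N. ph k \<in> rat_fun_field K x) \<and> f = (\<Sum>k<N. ph k * bb k)"
    and e: "e \<ge> 1" and cj: "\<forall>j<e. cj j \<in> rat_fun_field K w"
    and rel: "x ^ e = (\<Sum>j<e. cj j * x ^ j)"
    and w: "in_maxideal v w" "w \<noteq> 0"
  shows spanprop
proof -
  let ?L = "rat_fun_field K w"
  have L: "is_subfield ?L" using rff_subfield[OF sf] .
  have KL: "K \<subseteq> ?L" using K_sub_rff[OF sf] .
  have sub: "rat_fun_field K x \<subseteq> spn ?L (\<lambda>j. x ^ j) {..<e}"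
    using rff_sub_S[OF sf L KL e _ rel] cj by blast
  have "\<forall>f. f \<in> spn ?L (\<lambda>(k, j). x ^ j * bb k) ({..<N} \<times> {..<e})"
  proof
    fix f
    obtain ph where ph: "\<forall>k<N. ph k \<in> rat_fun_field K x" "f = (\<Sum>k<N. ph k * bb k)" using Fspan by blast
    show "f \<in> spn ?L (\<lambda>(k, j). x ^ j * bb k) ({..<N} \<times> {..<e})"
      unfolding ph(2) by (rule spn_trans[where I="{..<N}" and J="{..<e}" and ph=ph and x=x and b=bb, OF L]) (use ph(1) sub in auto)
  qed
  moreover have "\<forall>y\<in>?L. in_valring v y \<longrightarrow> (\<exists>a\<in>K. in_maxideal v (y - a))"
    using rff_res[OF w] by blast
  ultimately show ?thesis unfolding spanprop_def
    by (intro exI[of _ ?L] exI[of _ "\<lambda>(k, j). x ^ j * bb k"] exI[of _ "{..<N} \<times> {..<e}"]) (use L KL in simp)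
qed

lemma spanprop_holds: assumes gff: "global_function_field K" shows spanprop
proof -
  obtain x bs where x: "\<not> algebraic_over K x"
    and bs: "\<forall>f. \<exists>cs. length cs = length bs \<and> set cs \<subseteq> rat_fun_field K x \<and> f = sum_list (map2 (*) cs bs)"
    using gff unfolding global_function_field_def by blast
  define N where "N = length bs"
  have Fspan: "\<forall>f. \<exists>ph. (\<forall>k<N. ph k \<in> rat_fun_field K x) \<and> f = (\<Sum>k<N. ph k * bs ! k)"
  proof
    fix f
    obtain cs where cs: "length cs = length bs" "set cs \<subseteq> rat_fun_field K x" "f = sum_list (map2 (*) cs bs)"
      using bs by blast
    show "\<exists>ph. (\<forall>k<N. ph k \<in> rat_fun_field K x) \<and> f = (\<Sum>k<N. ph k * bs ! k)"
      using cs list_sum2[OF cs(1)] unfolding N_def by (intro exI[of _ "\<lambda>k. cs ! k"]) auto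
  qed
  have Lx: "is_subfield (rat_fun_field K x)" using rff_subfield[OF sf] .
  consider "v x > 0" | "v x < 0" | "v x = 0" by linarith
  then show ?thesis
  proof cases
    case 1
    then have "x \<noteq> 0" using v0 by auto
    have "in_maxideal v x" using 1 by (simp add: in_maxideal_def)
    moreover have "\<forall>j<(1::nat). (\<lambda>_. x) j \<in> rat_fun_field K x" using x_in_rff[OF sf] by simp
    moreover have "x ^ 1 = (\<Sum>j<(1::nat). (\<lambda>_. x) j * x ^ j)" by simp
    ultimately show ?thesis using from_w[OF Fspan, of 1 "\<lambda>_. x" x] \<open>x \<noteq> 0\<close> by blast
  next
    case 2
    then have "x \<noteq> 0" using v0 by auto
    have "inverse (inverse x) \<in> rat_fun_field K (inverse x)"
      using sfinv[OF rff_subfield[OF sf] x_in_rff[OF sf]] .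
    then have "inverse (inverse x) \<in> rat_fun_field K (inverse x)" .
    have "in_maxideal v (inverse x)" using 2 \<open>x \<noteq> 0\<close> vinv by (simp add: in_maxideal_def)
    moreover have "\<forall>j<(1::nat). (\<lambda>_. x) j \<in> rat_fun_field K (inverse x)" using \<open>inverse (inverse x) \<in> _\<close> by simp
    moreover have "x ^ 1 = (\<Sum>j<(1::nat). (\<lambda>_. x) j * x ^ j)" by simp
    ultimately show ?thesis using from_w[OF Fspan, of 1 "\<lambda>_. x" "inverse x"] \<open>x \<noteq> 0\<close> by simp
  next
    case 3
    obtain z where z: "z \<noteq> 0" "v z = 1" using vz by blast
    have zs: "\<forall>k\<in>{..N}. z ^ k \<in> spn (rat_fun_field K x) (\<lambda>k. bs ! k) {..<N}"
    proof
      fix k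
      obtain ph where "\<forall>k<N. ph k \<in> rat_fun_field K x" "z ^ k = (\<Sum>k<N. ph k * bs ! k)" using Fspan by blast
      then show "z ^ k \<in> spn (rat_fun_field K x) (\<lambda>k. bs ! k) {..<N}" unfolding spn_def by auto
    qed
    obtain c where c: "\<forall>k\<in>{..N}. c k \<in> rat_fun_field K x" "\<exists>k\<in>{..N}. c k \<noteq> 0"
      "(\<Sum>k\<in>{..N}. c k * z ^ k) = 0"
      using steinitz[OF Lx, of "{..<N}" "{..N}" "\<lambda>k. z ^ k" "\<lambda>k. bs ! k"] zs by auto
    have "\<exists>ph\<in>rat_fun_field K x. ph \<noteq> 0 \<and> v ph \<noteq> 0"
    proof (rule ccontr)
      assume "\<not> ?thesis"
      then have v0c: "\<And>k. k \<in> {..N} \<Longrightarrow> c k \<noteq> 0 \<Longrightarrow> v (c k) = 0" using c(1) by blast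
      define A where "A = {k\<in>{..N}. c k \<noteq> 0}"
      have "(\<Sum>k\<in>A. c k * z ^ k) = (\<Sum>k\<in>{..N}. c k * z ^ k)"
        unfolding A_def by (rule sum.mono_neutral_left) auto
      moreover have "(\<Sum>k\<in>A. c k * z ^ k) \<noteq> 0"
      proof (rule distinct_vals_nonzero)
        show "finite A" "A \<noteq> {}" using c(2) unfolding A_def by auto
        show "\<And>i. i \<in> A \<Longrightarrow> c i * z ^ i \<noteq> 0" using z unfolding A_def by auto
        have "\<And>i. i \<in> A \<Longrightarrow> v (c i * z ^ i) = int i"
          using z v0c unfolding A_def by (simp add: vmult vpow)
        then show "\<And>i j. i \<in> A \<Longrightarrow> j \<in> A \<Longrightarrow> i \<noteq> j \<Longrightarrow> v (c i * z ^ i) \<noteq> v (c j * z ^ j)" by auto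
      qed
      ultimately show False using c(3) by simp
    qed
    then obtain ph where ph: "ph \<in> rat_fun_field K x" "ph \<noteq> 0" "v ph \<noteq> 0" by blast
    obtain a b where ab: "Kpoly K a" "Kpoly K b" "poly b x \<noteq> 0" "ph = poly a x / poly b x"
      using ph(1) rff_iff[OF sf] by blast
    have an: "poly a x \<noteq> 0" using ab ph(2) by auto
    have xv: "in_valring v x" using 3 by (simp add: in_valring_def)
    have "v (poly a x) \<ge> 0" "v (poly b x) \<ge> 0" using poly_VR[OF xv] ab(1,2) an ab(3) unfolding in_valring_def by auto
    moreover have "v ph = v (poly a x) - v (poly b x)" using ab an by (simp add: vdiv)
    ultimately obtain p where p: "Kpoly K p" "poly p x \<noteq> 0" "v (poly p x) > 0"
    proof (cases "v (poly a x) > 0")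
      case True then show ?thesis using that ab(1) an by blast
    next
      case False
      then have "v (poly b x) > 0" using ph(3) \<open>v ph = _\<close> \<open>v (poly a x) \<ge> 0\<close> \<open>v (poly b x) \<ge> 0\<close> by linarith
      then show ?thesis using that ab(2,3) by blast
    qed
    have pn: "p \<noteq> 0" using p(2) by auto
    have dp: "degree p \<ge> 1"
    proof (rule ccontr)
      assume "\<not> ?thesis" then have "degree p = 0" by simp
      then have "p = [:coeff p 0:]" using degree_0_id by metis
      then have "poly p x = poly [:coeff p 0:] x" by (rule arg_cong)
      then have "poly p x = coeff p 0" by simp
      moreover have "coeff p 0 \<in> K" using p(1) Kpoly_def by blast
      ultimately show False using p(2,3) vK by simp
    qed
    define e where "e = degree p"
    define w where "w = poly p x"
    define lc where "lc = coeff p e"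
    have lc: "lc \<noteq> 0" "lc \<in> K" using leading_coeff_neq_0[OF pn] p(1) unfolding lc_def e_def Kpoly_def by auto
    define cj where "cj j = (if j = 0 then w / lc else 0) - coeff p j / lc" for j
    have wsum: "w = (\<Sum>j<e. coeff p j * x ^ j) + lc * x ^ e"
    proof -
      have "{..e} = insert e {..<e}" by auto
      then show ?thesis unfolding w_def poly_altdef e_def[symmetric] lc_def by (simp add: add.commute)
    qed
    have "(\<Sum>j<e. cj j * x ^ j) = (\<Sum>j<e. (if j = 0 then w / lc else 0) * x ^ j) - (\<Sum>j<e. coeff p j * x ^ j) / lc"
      unfolding cj_def by (simp add: left_diff_distrib sum_subtractf sum_divide_distrib)
    also have "(\<Sum>j<e. (if j = 0 then w / lc else 0) * x ^ j) = (\<Sum>j<e. if j = 0 then w / lc else 0)"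
      by (rule sum.cong) auto
    also have "\<dots> = w / lc" using dp unfolding e_def by simp
    finally have r1: "(\<Sum>j<e. cj j * x ^ j) = w / lc - (\<Sum>j<e. coeff p j * x ^ j) / lc" .
    have "x ^ e = (w - (\<Sum>j<e. coeff p j * x ^ j)) / lc" using lc(1) by (simp add: wsum)
    then have rel: "x ^ e = (\<Sum>j<e. cj j * x ^ j)" using r1 by (simp add: diff_divide_distrib)
    have Lw: "is_subfield (rat_fun_field K w)" using rff_subfield[OF sf] .
    have cjL: "\<forall>j<e. cj j \<in> rat_fun_field K w"
    proof (intro allI impI)
      fix j
      have "coeff p j \<in> rat_fun_field K w" "lc \<in> rat_fun_field K w"
        using p(1) lc K_sub_rff[OF sf] unfolding Kpoly_def by auto
      moreover have "w \<in> rat_fun_field K w" using x_in_rff[OF sf] .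
      ultimately show "cj j \<in> rat_fun_field K w" unfolding cj_def
        by (cases "j = 0") (simp_all add: sfdiff[OF Lw] sfdiv[OF Lw] sf0[OF Lw] sfneg[OF Lw])
    qed
    have "in_maxideal v w" "w \<noteq> 0" using p(2,3) unfolding w_def in_maxideal_def by auto
    then show ?thesis using from_w[OF Fspan _ cjL rel] dp unfolding e_def by blast
  qed
qed

end

context nval
begin

definition indepP :: "(nat \<Rightarrow> 'a) \<Rightarrow> nat \<Rightarrow> bool" where
  "indepP z d \<longleftrightarrow> (\<forall>c. (\<forall>i<d. c i \<in> K) \<longrightarrow> (\<exists>i<d. c i \<noteq> 0) \<longrightarrow> \<not> in_maxideal v (\<Sum>i<d. c i * z i))"

lemma indep_bound: assumes spanprop
  shows "\<exists>M. \<forall>z d. (\<forall>i<d. in_valring v (z i)) \<longrightarrow> indepP z d \<longrightarrow> d \<le> M"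
proof -
  obtain L B and I :: "(nat \<times> nat) set" where LB: "is_subfield L" "K \<subseteq> L" "finite I" "\<forall>f. f \<in> spn L B I"
    "\<forall>y\<in>L. in_valring v y \<longrightarrow> (\<exists>a\<in>K. in_maxideal v (y - a))"
    using assms unfolding spanprop_def by blast
  have "d \<le> card I" if zv: "\<forall>i<d. in_valring v (z i)" and ind: "indepP z d" for z d
  proof (rule ccontr)
    assume "\<not> d \<le> card I"
    then obtain c where c: "\<forall>j\<in>{..<d}. c j \<in> L" "\<exists>j\<in>{..<d}. c j \<noteq> 0" "(\<Sum>j\<in>{..<d}. c j * z j) = 0"
      using steinitz[OF LB(1,3), of "{..<d}" z B] LB(4) by auto
    define A where "A = {i\<in>{..<d}. c i \<noteq> 0}"
    have A: "finite A" "A \<noteq> {}" using c(2) unfolding A_def by auto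
    obtain i0 where i0: "i0 \<in> A" "\<forall>j\<in>A. v (c i0) \<le> v (c j)"
    proof -
      obtain y where "y \<in> (\<lambda>i. v (c i)) ` A" "\<forall>t\<in>(\<lambda>i. v (c i)) ` A. y \<le> t"
        using A by (metis Min_in Min_le finite_imageI image_is_empty)
      then show ?thesis using that by auto
    qed
    have ci0: "c i0 \<noteq> 0" "i0 < d" using i0(1) unfolding A_def by auto
    define ps where "ps i = c i / c i0" for i
    have psL: "ps i \<in> L" if "i < d" for i using c(1) that ci0 sfdiv[OF LB(1)] unfolding ps_def by auto
    have psV: "in_valring v (ps i)" if "i < d" for i
    proof (cases "c i = 0")
      case True then show ?thesis unfolding ps_def in_valring_def by simp
    next
      case False
      then have "i \<in> A" using that unfolding A_def by auto
      then show ?thesis using i0(2) False ci0 unfolding ps_def in_valring_def by (simp add: vdiv)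
    qed
    have "\<forall>i. \<exists>a. i < d \<longrightarrow> a \<in> K \<and> in_maxideal v (ps i - a)"
      using LB(5) psL psV by blast
    then obtain a where a: "\<And>i. i < d \<Longrightarrow> a i \<in> K \<and> in_maxideal v (ps i - a i)" by metis
    have "ps i0 = 1" using ci0 unfolding ps_def by simp
    then have "a i0 \<noteq> 0" using a[OF ci0(2)] K_not_MI[OF K1] by auto
    have s0: "(\<Sum>i<d. ps i * z i) = 0"
      using c(3) unfolding ps_def by (simp add: sum_divide_distrib[symmetric] mult.commute[of _ "inverse _"] divide_inverse mult.assoc sum_distrib_left[symmetric])
    have "(\<Sum>i<d. a i * z i) = (\<Sum>i<d. ps i * z i) - (\<Sum>i<d. (ps i - a i) * z i)"
      by (simp add: sum_subtractf[symmetric] algebra_simps)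
    also have "in_maxideal v \<dots>"
      using s0 MI_neg[OF MI_sum[of "{..<d}" "\<lambda>i. (ps i - a i) * z i"]] a zv MI_mult[of _ "ps _ - a _"]
      by (simp add: mult.commute)
    finally show False using ind a \<open>a i0 \<noteq> 0\<close> ci0(2) unfolding indepP_def by blast
  qed
  then show ?thesis by blast
qed

definition pdP :: "nat \<Rightarrow> bool" where
  "pdP d \<longleftrightarrow> (\<exists>bs. length bs = d \<and> (\<forall>b\<in>set bs. in_valring v b) \<and>
      (\<forall>f. in_valring v f \<longrightarrow> (\<exists>cs. length cs = d \<and> set cs \<subseteq> K \<and>
            in_maxideal v (f - sum_list (map2 (*) cs bs)))))"

lemma place_degree_pdP: "place_degree K v = (LEAST d. pdP d)"
  unfolding place_degree_def pdP_def by simp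

lemma pdP_exists: assumes spanprop shows "\<exists>d. pdP d"
proof -
  obtain M where M: "\<And>z d. \<forall>i<d. in_valring v (z i) \<Longrightarrow> indepP z d \<Longrightarrow> d \<le> M"
    using indep_bound[OF assms] by blast
  define D where "D = {d. \<exists>z. (\<forall>i<d. in_valring v (z i)) \<and> indepP z d}"
  have "0 \<in> D" unfolding D_def indepP_def by auto
  have "D \<subseteq> {..M}" using M unfolding D_def by auto
  then have fD: "finite D" using finite_subset by blast
  define d where "d = Max D"
  have "d \<in> D" using fD \<open>0 \<in> D\<close> unfolding d_def using Max_in[OF fD] by blast
  then obtain z where z: "\<forall>i<d. in_valring v (z i)" "indepP z d" unfolding D_def by blast
  have nd: "Suc d \<notin> D" using Max_ge[OF fD, of "Suc d"] unfolding d_def by auto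
  have "pdP d" unfolding pdP_def
  proof (rule exI[of _ "map z [0..<d]"], intro conjI allI impI)
    show "length (map z [0..<d]) = d" by simp
    show "\<forall>b\<in>set (map z [0..<d]). in_valring v b" using z(1) by auto
    fix f assume f: "in_valring v f"
    define z' where "z' = z(d := f)"
    have "\<forall>i<Suc d. in_valring v (z' i)" using z(1) f unfolding z'_def by (simp add: less_Suc_eq)
    then have "\<not> indepP z' (Suc d)" using nd unfolding D_def by blast
    then obtain c where c: "\<forall>i<Suc d. c i \<in> K" "\<exists>i<Suc d. c i \<noteq> 0" "in_maxideal v (\<Sum>i<Suc d. c i * z' i)"
      unfolding indepP_def by blast
    have sz: "(\<Sum>i<Suc d. c i * z' i) = (\<Sum>i<d. c i * z i) + c d * f"
      unfolding z'_def by simp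
    have cd: "c d \<noteq> 0"
    proof
      assume "c d = 0"
      then have "in_maxideal v (\<Sum>i<d. c i * z i)" "\<exists>i<d. c i \<noteq> 0" using c(2,3) sz
        by (auto simp: less_Suc_eq)
      then show False using z(2) c(1) unfolding indepP_def by auto
    qed
    have cdK: "c d \<in> K" using c(1) by simp
    define cs where "cs = map (\<lambda>i. - c i / c d) [0..<d]"
    have "sum_list (map2 (*) cs (map z [0..<d])) = (\<Sum>i<d. (- c i / c d) * z i)"
      by (subst list_sum2) (simp_all add: cs_def)
    also have "(\<Sum>i<d. (- c i / c d) * z i) = - (inverse (c d) * (\<Sum>i<d. c i * z i))"
      unfolding sum_distrib_left sum_negf[symmetric] by (rule sum.cong) (simp_all add: divide_inverse)
    finally have "f - sum_list (map2 (*) cs (map z [0..<d])) = f + inverse (c d) * (\<Sum>i<d. c i * z i)" by simp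
    also have "\<dots> = inverse (c d) * (\<Sum>i<Suc d. c i * z' i)"
      unfolding sz using cd by (simp add: distrib_left)
    finally have "f - sum_list (map2 (*) cs (map z [0..<d])) = inverse (c d) * (\<Sum>i<Suc d. c i * z' i)" .
    moreover have "in_valring v (inverse (c d))" using VR_K Kinv cdK by blast
    ultimately have "in_maxideal v (f - sum_list (map2 (*) cs (map z [0..<d])))"
      using MI_mult c(3) by simp
    moreover have "length cs = d" "set cs \<subseteq> K" using c(1) cd Kdiv Kneg unfolding cs_def by auto
    ultimately show "\<exists>cs. length cs = d \<and> set cs \<subseteq> K \<and> in_maxideal v (f - sum_list (map2 (*) cs (map z [0..<d])))"
      by blast
  qed
  then show ?thesis by blast
qed

lemma residue_ok: assumes rp: "rational_place K v" and sp: spanprop and f: "in_valring v f"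
  shows "residue K v f \<in> K \<and> in_maxideal v (f - residue K v f)"
proof -
  have "place_degree K v = 1" using rp unfolding rational_place_def by simp
  then have "pdP 1" using LeastI_ex[OF pdP_exists[OF sp]] place_degree_pdP by simp
  then obtain bs where bs: "length bs = 1" "\<forall>b\<in>set bs. in_valring v b"
    "\<And>f. in_valring v f \<Longrightarrow> \<exists>cs. length cs = 1 \<and> set cs \<subseteq> K \<and> in_maxideal v (f - sum_list (map2 (*) cs bs))"
    unfolding pdP_def by blast
  obtain b where b: "bs = [b]" using bs(1) by (metis One_nat_def length_0_conv length_Suc_conv)
  have one: "\<And>f. in_valring v f \<Longrightarrow> \<exists>c\<in>K. in_maxideal v (f - c * b)"
  proof -
    fix f assume "in_valring v f"
    then obtain cs where "length cs = 1" "set cs \<subseteq> K" "in_maxideal v (f - sum_list (map2 (*) cs bs))"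
      using bs(3) by blast
    then obtain c where "cs = [c]" by (metis One_nat_def length_0_conv length_Suc_conv)
    then show "\<exists>c\<in>K. in_maxideal v (f - c * b)" using \<open>set cs \<subseteq> K\<close> \<open>in_maxideal v _\<close> b by auto
  qed
  obtain c1 where c1: "c1 \<in> K" "in_maxideal v (1 - c1 * b)" using one[OF VR_K[OF K1]] by blast
  have "c1 \<noteq> 0" using c1 K_not_MI[OF K1] by auto
  obtain c where c: "c \<in> K" "in_maxideal v (f - c * b)" using one[OF f] by blast
  have "f - c / c1 = (f - c * b) - (c / c1) * (1 - c1 * b)" using \<open>c1 \<noteq> 0\<close> by (simp add: field_simps)
  moreover have "in_maxideal v ((f - c * b) - (c / c1) * (1 - c1 * b))"
    using MI_diff[OF c(2) MI_mult[OF VR_K[OF Kdiv[OF c(1) c1(1)]] c1(2)]] .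
  ultimately have ex: "\<exists>a. a \<in> K \<and> in_maxideal v (f - a)" using Kdiv[OF c(1) c1(1)] by metis
  have uniq: "a = a'" if "a \<in> K \<and> in_maxideal v (f - a)" "a' \<in> K \<and> in_maxideal v (f - a')" for a a'
  proof (rule ccontr)
    assume "a \<noteq> a'"
    have "in_maxideal v ((f - a') - (f - a))" using MI_diff that by blast
    then show False using K_not_MI[OF Kdiff[of a a']] that \<open>a \<noteq> a'\<close> by simp
  qed
  have "\<exists>!a. a \<in> K \<and> in_maxideal v (f - a)" using ex uniq by blast
  then show ?thesis unfolding residue_def by (rule theI')
qed

end

locale rpl = nval +
  fixes t :: 'a
  assumes rp: "rational_place K v" and sp: spanprop and vt: "v t = 1"
begin

lemma t0: "t \<noteq> 0" using vt v0 by auto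

lemma res: "in_valring v f \<Longrightarrow> residue K v f \<in> K \<and> in_maxideal v (f - residue K v f)"
  using residue_ok[OF rp sp] by blast

lemma res_unique: assumes "in_valring v f" "a \<in> K" "in_maxideal v (f - a)"
  shows "residue K v f = a"
proof (rule ccontr)
  assume ne: "residue K v f \<noteq> a"
  have r: "residue K v f \<in> K" "in_maxideal v (f - residue K v f)" using res[OF assms(1)] by auto
  have "in_maxideal v ((f - a) - (f - residue K v f))" using MI_diff assms(3) r(2) by blast
  then show False using K_not_MI[OF Kdiff[OF r(1) assms(2)]] ne by simp
qed

lemma res_diff: assumes "in_valring v f" "in_valring v g"
  shows "residue K v (f - g) = residue K v f - residue K v g"
proof (rule res_unique)
  show "in_valring v (f - g)" using VR_diff assms by blast
  have rf: "residue K v f \<in> K" "in_maxideal v (f - residue K v f)" using res assms(1) by auto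
  have rg: "residue K v g \<in> K" "in_maxideal v (g - residue K v g)" using res assms(2) by auto
  show "residue K v f - residue K v g \<in> K" using Kdiff rf rg by blast
  have eq: "f - g - (residue K v f - residue K v g) = (f - residue K v f) - (g - residue K v g)" by simp
  show "in_maxideal v (f - g - (residue K v f - residue K v g))" unfolding eq using MI_diff[OF rf(2) rg(2)] .
qed

lemma res0: "residue K v 0 = 0"
  using res_unique[of 0 0] VR0 K0 MI0 by simp

lemma shift_VR: assumes "in_valring v f" shows "in_valring v ((f - residue K v f) / t)"
proof -
  have "in_maxideal v (f - residue K v f)" using res assms by blast
  then show ?thesis
  proof (cases "f - residue K v f = 0")
    case False
    then have "v (f - residue K v f) > 0" using \<open>in_maxideal v _\<close> unfolding in_maxideal_def by simp
    then show ?thesis using t0 vt False unfolding in_valring_def by (simp add: vdiv)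
  qed (simp add: in_valring_def)
qed

lemma lc_diff: "in_valring v f \<Longrightarrow> in_valring v g \<Longrightarrow>
   loc_coeff K v t (f - g) k = loc_coeff K v t f k - loc_coeff K v t g k"
proof (induction k arbitrary: f g)
  case 0 then show ?case by (simp add: res_diff)
next
  case (Suc k)
  have "(f - g - residue K v (f - g)) / t = (f - residue K v f) / t - (g - residue K v g) / t"
    using Suc.prems by (simp add: res_diff diff_divide_distrib)
  then show ?case using Suc.IH[OF shift_VR[OF Suc.prems(1)] shift_VR[OF Suc.prems(2)]] by simp
qed

lemma lc_zero: "loc_coeff K v t 0 k = 0"
  by (induction k) (simp_all add: res0)

lemma lc_val: "in_valring v f \<Longrightarrow> f \<noteq> 0 \<Longrightarrow> nat (v f) = j \<Longrightarrow>
   (\<forall>k<j. loc_coeff K v t f k = 0) \<and> loc_coeff K v t f j \<noteq> 0"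
proof (induction j arbitrary: f)
  case 0
  then have vf: "v f = 0" unfolding in_valring_def by auto
  have "residue K v f \<noteq> 0"
  proof
    assume "residue K v f = 0"
    then have "in_maxideal v f" using res[OF 0(1)] by simp
    then show False using vf 0(2) unfolding in_maxideal_def by simp
  qed
  then show ?case by simp
next
  case (Suc j)
  then have vf: "v f = int (Suc j)" unfolding in_valring_def by auto
  then have "in_maxideal v f" unfolding in_maxideal_def by simp
  then have r0: "residue K v f = 0" using res_unique[OF Suc.prems(1) K0] by simp
  define f1 where "f1 = f / t"
  have f1: "f1 \<noteq> 0" "v f1 = int j" using Suc.prems(2) t0 vf vt unfolding f1_def by (auto simp: vdiv)
  then have "in_valring v f1" unfolding in_valring_def by simp
  then have IH: "(\<forall>k<j. loc_coeff K v t f1 k = 0) \<and> loc_coeff K v t f1 j \<noteq> 0"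
    using Suc.IH f1 by simp
  have lk: "loc_coeff K v t f (Suc k) = loc_coeff K v t f1 k" for k using r0 by (simp add: f1_def)
  have "loc_coeff K v t f 0 = 0" using r0 by simp
  then show ?case using IH lk by (auto simp: less_Suc_eq_0_disj)
qed

lemma lc_iff: assumes "in_valring v f"
  shows "((\<forall>k<j. loc_coeff K v t f k = 0) \<and> loc_coeff K v t f j \<noteq> 0) \<longleftrightarrow> (f \<noteq> 0 \<and> v f = int j)"
proof
  assume h: "(\<forall>k<j. loc_coeff K v t f k = 0) \<and> loc_coeff K v t f j \<noteq> 0"
  then have "f \<noteq> 0" using lc_zero by auto
  moreover have "nat (v f) = j"
  proof (rule ccontr)
    assume ne: "nat (v f) \<noteq> j"
    have L: "(\<forall>k<nat (v f). loc_coeff K v t f k = 0) \<and> loc_coeff K v t f (nat (v f)) \<noteq> 0"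
      using lc_val[OF assms \<open>f \<noteq> 0\<close>] by simp
    show False
    proof (cases "nat (v f) < j")
      case True then show ?thesis using h L by auto
    next
      case False then show ?thesis using h L ne by auto
    qed
  qed
  ultimately show "f \<noteq> 0 \<and> v f = int j" using assms unfolding in_valring_def by auto
next
  assume "f \<noteq> 0 \<and> v f = int j"
  then show "(\<forall>k<j. loc_coeff K v t f k = 0) \<and> loc_coeff K v t f j \<noteq> 0" using lc_val[OF assms] by auto
qed

end

lemma I_ell_sub: "I_ell n m l A \<subseteq> {1..n}" unfolding I_ell_def by auto
lemma fin_I: "finite (I_ell n m l A)" by (rule finite_subset[OF I_ell_sub]) simp

lemma I_split:
  assumes "l \<in> {1..m}" "i \<in> I_ell n m l (\<lambda>i k. A i k - B i k)"
  shows "i \<in> I_ell n m l A \<or> i \<in> I_ell n m l B \<or> (\<exists>\<nu>\<in>{l+1..m}. i \<in> I_ell n m \<nu> A \<and> i \<in> I_ell n m \<nu> B)"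
proof -
  have i: "i \<in> {1..n}" "\<forall>k\<in>{l+1..m}. A i k = B i k" "A i l \<noteq> B i l"
    using assms(2) unfolding I_ell_def by auto
  show ?thesis
  proof (cases "\<exists>\<nu>\<in>{l+1..m}. A i \<nu> \<noteq> 0")
    case True
    define S where "S = {\<nu>\<in>{l+1..m}. A i \<nu> \<noteq> 0}"
    have S: "finite S" "S \<noteq> {}" using True unfolding S_def by auto
    define \<nu> where "\<nu> = Max S"
    have nu: "\<nu> \<in> S" using Max_in[OF S] unfolding \<nu>_def .
    have top: "\<forall>k\<in>{\<nu>+1..m}. A i k = 0"
    proof
      fix k assume k: "k \<in> {\<nu>+1..m}"
      show "A i k = 0"
      proof (rule ccontr)
        assume "A i k \<noteq> 0"
        then have "k \<in> S" using k nu unfolding S_def by auto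
        then have "k \<le> \<nu>" using Max_ge[OF S(1)] unfolding \<nu>_def by auto
        then show False using k by auto
      qed
    qed
    have nuS: "\<nu> \<in> {l+1..m}" "A i \<nu> \<noteq> 0" using nu unfolding S_def by auto
    have "\<forall>k\<in>{\<nu>+1..m}. B i k = 0"
    proof
      fix k assume k: "k \<in> {\<nu>+1..m}"
      then have "k \<in> {l+1..m}" using nuS by auto
      then have "A i k = B i k" using i(2) by blast
      moreover have "A i k = 0" using top k by blast
      ultimately show "B i k = 0" by simp
    qed
    moreover have "A i \<nu> = B i \<nu>" using nuS(1) i(2) by blast
    then have "B i \<nu> \<noteq> 0" using nuS(2) by simp
    ultimately have "i \<in> I_ell n m \<nu> A \<and> i \<in> I_ell n m \<nu> B"
      using top nuS(2) i(1) by (simp add: I_ell_def)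
    then show ?thesis using nuS(1) by blast
  next
    case False
    then have a0: "\<forall>k\<in>{l+1..m}. A i k = 0" by auto
    show ?thesis
    proof (cases "A i l = 0")
      case True
      then have "i \<in> I_ell n m l B" using a0 i unfolding I_ell_def by auto
      then show ?thesis by blast
    next
      case False
      then have "i \<in> I_ell n m l A" using a0 i unfolding I_ell_def by auto
      then show ?thesis by blast
    qed
  qed
qed

lemma card_I_bound:
  assumes XA: "\<forall>l\<in>{1..m}. card (I_ell n m l A) \<le> X l" and XB: "\<forall>l\<in>{1..m}. card (I_ell n m l B) \<le> X l"
    and l: "l \<in> {1..m}"
  shows "card (I_ell n m l (\<lambda>i k. A i k - B i k)) \<le> 2 * X l + (\<Sum>\<nu>=l+1..m. X \<nu>)"
proof -
  have sub: "I_ell n m l (\<lambda>i k. A i k - B i k) \<subseteq> I_ell n m l A \<union> I_ell n m l B \<union> (\<Union>\<nu>\<in>{l+1..m}. I_ell n m \<nu> A)"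
    using I_split[OF l] by blast
  have "card (I_ell n m l (\<lambda>i k. A i k - B i k)) \<le> card (I_ell n m l A \<union> I_ell n m l B \<union> (\<Union>\<nu>\<in>{l+1..m}. I_ell n m \<nu> A))"
    using sub by (intro card_mono) (simp_all add: fin_I)
  also have "\<dots> \<le> card (I_ell n m l A) + card (I_ell n m l B) + card (\<Union>\<nu>\<in>{l+1..m}. I_ell n m \<nu> A)"
    using card_Un_le[of "I_ell n m l A \<union> I_ell n m l B" "\<Union>\<nu>\<in>{l+1..m}. I_ell n m \<nu> A"]
      card_Un_le[of "I_ell n m l A" "I_ell n m l B"] by linarith
  finally have c1: "card (I_ell n m l (\<lambda>i k. A i k - B i k)) \<le> card (I_ell n m l A) + card (I_ell n m l B) + card (\<Union>\<nu>\<in>{l+1..m}. I_ell n m \<nu> A)" .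
  have "card (\<Union>\<nu>\<in>{l+1..m}. I_ell n m \<nu> A) \<le> (\<Sum>\<nu>=l+1..m. card (I_ell n m \<nu> A))"
    by (rule card_UN_le) simp
  also have "\<dots> \<le> (\<Sum>\<nu>=l+1..m. X \<nu>)"
    by (rule sum_mono) (use XA l in auto)
  finally have "card (I_ell n m l (\<lambda>i k. A i k - B i k)) \<le> card (I_ell n m l A) + card (I_ell n m l B) + (\<Sum>\<nu>=l+1..m. X \<nu>)" using c1 by linarith
  moreover have "card (I_ell n m l A) \<le> X l" "card (I_ell n m l B) \<le> X l" using XA XB l by auto
  ultimately show ?thesis by linarith
qed

lemma I_disj: assumes "i \<in> I_ell n m l C" "i \<in> I_ell n m l' C" "l \<le> m" "l' \<le> m" shows "l = l'"
proof (rule ccontr)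
  assume "l \<noteq> l'"
  then consider "l < l'" | "l' < l" by linarith
  then show False
  proof cases
    case 1 then have "l' \<in> {l+1..m}" using assms by auto
    then show False using assms(1,2) unfolding I_ell_def by auto
  next
    case 2 then have "l \<in> {l'+1..m}" using assms by auto
    then show False using assms(1,2) unfolding I_ell_def by auto
  qed
qed

definition lvl :: "nat \<Rightarrow> nat \<Rightarrow> (nat \<Rightarrow> nat \<Rightarrow> 'a::field) \<Rightarrow> nat \<Rightarrow> nat" where
  "lvl n m C i = (\<Sum>l=1..m. (l + 1) * (if i \<in> I_ell n m l C then 1 else 0))"

lemma card_as_sum: "card (I_ell n m l C) = (\<Sum>i=1..n. if i \<in> I_ell n m l C then 1 else 0)"
proof -
  have "I_ell n m l C = {i\<in>{1..n}. i \<in> I_ell n m l C}" using I_ell_sub by blast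
  then have "card (I_ell n m l C) = card {i\<in>{1..n}. i \<in> I_ell n m l C}" by simp
  also have "\<dots> = (\<Sum>i\<in>{i\<in>{1..n}. i \<in> I_ell n m l C}. 1)" by simp
  also have "\<dots> = (\<Sum>i=1..n. if i \<in> I_ell n m l C then 1 else 0)"
    using sum.inter_filter[of "{1..n}" "\<lambda>_. 1::nat" "\<lambda>i. i \<in> I_ell n m l C"] by simp
  finally show ?thesis .
qed

lemma J_as_lvl: "(\<Sum>l=1..m. (l + 1) * card (I_ell n m l C)) = (\<Sum>i=1..n. lvl n m C i)"
  unfolding lvl_def card_as_sum sum_distrib_left by (rule sum.swap)

lemma lvl_single: assumes "i \<in> I_ell n m l0 C" "l0 \<in> {1..m}"
  shows "lvl n m C i = l0 + 1"
proof -
  have "lvl n m C i = (\<Sum>l=1..m. if l = l0 then l0 + 1 else 0)"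
    unfolding lvl_def
  proof (rule sum.cong)
    fix l assume "l \<in> {1..m}"
    show "(l + 1) * (if i \<in> I_ell n m l C then 1 else 0) = (if l = l0 then l0 + 1 else 0)"
    proof (cases "l = l0")
      case True then show ?thesis using assms(1) by simp
    next
      case False
      have "i \<notin> I_ell n m l C"
      proof
        assume "i \<in> I_ell n m l C"
        then have "l0 = l" using I_disj[of i n m l0 C l] assms \<open>l \<in> {1..m}\<close> by simp
        then show False using False by simp
      qed
      then show ?thesis using False by simp
    qed
  qed simp
  also have "\<dots> = l0 + 1" using assms(2) by simp
  finally show ?thesis .
qed

lemma lvl_ge: assumes "i \<in> I_ell n m l0 C" "l0 \<in> {1..m}"
  shows "lvl n m C i \<ge> l0 + 1" using lvl_single[OF assms] by simp

lemma lvl_diff: "lvl n m (\<lambda>i k. A i k - B i k) i \<le> lvl n m A i + lvl n m B i"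
proof (cases "\<exists>l\<in>{1..m}. i \<in> I_ell n m l (\<lambda>i k. A i k - B i k)")
  case True
  then obtain l where l: "l \<in> {1..m}" "i \<in> I_ell n m l (\<lambda>i k. A i k - B i k)" by blast
  have e: "lvl n m (\<lambda>i k. A i k - B i k) i = l + 1" using lvl_single[OF l(2) l(1)] .
  from I_split[OF l] show ?thesis
  proof (elim disjE bexE conjE)
    assume "i \<in> I_ell n m l A" then show ?thesis using e lvl_ge[OF _ l(1), of i n A] by linarith
  next
    assume "i \<in> I_ell n m l B" then show ?thesis using e lvl_ge[OF _ l(1), of i n B] by linarith
  next
    fix \<nu> assume nu: "\<nu> \<in> {l+1..m}" "i \<in> I_ell n m \<nu> A"
    then have "\<nu> \<in> {1..m}" using l(1) by auto
    then have "lvl n m A i \<ge> \<nu> + 1" using lvl_ge[OF nu(2)] by blast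
    then show ?thesis using e nu(1) by auto
  qed
next
  case False
  then have "lvl n m (\<lambda>i k. A i k - B i k) i = 0" unfolding lvl_def by (intro sum.neutral) auto
  then show ?thesis by simp
qed

lemma J_bound:
  assumes XA: "\<forall>l\<in>{1..m}. card (I_ell n m l A) \<le> X l" and XB: "\<forall>l\<in>{1..m}. card (I_ell n m l B) \<le> X l"
  shows "(\<Sum>l=1..m. (l + 1) * card (I_ell n m l (\<lambda>i k. A i k - B i k))) \<le> 2 * (\<Sum>l=1..m. (l + 1) * X l)"
proof -
  have "(\<Sum>l=1..m. (l + 1) * card (I_ell n m l (\<lambda>i k. A i k - B i k))) \<le> (\<Sum>i=1..n. lvl n m A i + lvl n m B i)"
    unfolding J_as_lvl by (rule sum_mono) (rule lvl_diff)
  also have "\<dots> = (\<Sum>l=1..m. (l + 1) * card (I_ell n m l A)) + (\<Sum>l=1..m. (l + 1) * card (I_ell n m l B))"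
    unfolding J_as_lvl sum.distrib ..
  also have "\<dots> \<le> (\<Sum>l=1..m. (l + 1) * X l) + (\<Sum>l=1..m. (l + 1) * X l)"
    by (intro add_mono sum_mono mult_le_mono2) (use XA XB in auto)
  finally show ?thesis by simp
qed


lemma gff_sf: "global_function_field K \<Longrightarrow> is_subfield K"
  unfolding global_function_field_def by blast

lemma place_facts: assumes gff: "global_function_field K" and rp: "rational_place K P" and vt: "P t = 1"
  shows "rpl K P t"
proof -
  have sf: "is_subfield K" using gff_sf[OF gff] .
  have nv: "normalized_valuation K P" using rp unfolding rational_place_def by blast
  interpret nval K P using sf nv by unfold_locales
  have "spanprop" using spanprop_holds[OF gff] .
  then show ?thesis using rp vt by unfold_locales
qed

lemma M_card: assumes "al \<in> M_set K n m x c" "l \<in> {1..m}"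
  shows "card (I_ell n m l (\<lambda>i k. al i k - c i k)) \<le> flx x n l"
proof -
  have "int (card (I_ell n m l (\<lambda>i k. al i k - c i k))) \<le> \<lfloor>x l * real n\<rfloor>"
    using assms unfolding M_set_def by blast
  then show ?thesis unfolding flx_def using le_nat_iff by (metis of_nat_0_le_iff order_trans)
qed

lemma RR_diff: assumes sf: "is_subfield K" and f: "f \<in> RR_space K G" and g: "g \<in> RR_space K G"
  shows "f - g \<in> RR_space K G"
  unfolding RR_space_def
proof (cases "f - g = 0")
  case False
  have "P (f - g) \<ge> - G P" if P: "normalized_valuation K P" for P
  proof -
    interpret nval K P using sf P by unfold_locales
    show ?thesis
    proof (cases "f = 0 \<or> g = 0")
      case True
      then show ?thesis using f g P \<open>f - g \<noteq> 0\<close> unfolding RR_space_def using vneg by auto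
    next
      case fg: False
      have "P f \<ge> - G P" "P g \<ge> - G P" using f g fg P unfolding RR_space_def by auto
      then show ?thesis using vsub[of f g] fg False by simp
    qed
  qed
  then show "f - g \<in> {f. f = 0 \<or> (\<forall>P. normalized_valuation K P \<longrightarrow> - G P \<le> P f)}" by simp
qed simp

lemma RR_VR: assumes "f \<in> RR_space K G" "G P = 0" "normalized_valuation K P"
  shows "in_valring P f"
  using assms unfolding RR_space_def in_valring_def by auto

lemma div_deg_bar:
  assumes Pinj: "inj_on Pl {1..n}" and Prat: "\<forall>i\<in>{1..n}. rational_place K (Pl i)"
  shows "div_deg K (div_bar Pl n m E) = (\<Sum>i=1..n. min (int m + 1) (E (Pl i)))"
proof -
  let ?D = "div_bar Pl n m E"
  have sub: "{Q. ?D Q \<noteq> 0} \<subseteq> Pl ` {1..n}" unfolding div_bar_def by (auto split: if_splits)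
  have "div_deg K ?D = (\<Sum>Q\<in>Pl ` {1..n}. int (place_degree K Q) * ?D Q)"
    unfolding div_deg_def by (rule sum.mono_neutral_left) (use sub in auto)
  also have "\<dots> = (\<Sum>i=1..n. int (place_degree K (Pl i)) * ?D (Pl i))"
    by (rule sum.reindex[OF Pinj, unfolded comp_def])
  also have "\<dots> = (\<Sum>i=1..n. min (int m + 1) (E (Pl i)))"
  proof (rule sum.cong)
    fix i assume i: "i \<in> {1..n}"
    then have "place_degree K (Pl i) = 1" using Prat unfolding rational_place_def by blast
    moreover have "?D (Pl i) = min (int m + 1) (E (Pl i))" unfolding div_bar_def using i by auto
    ultimately show "int (place_degree K (Pl i)) * ?D (Pl i) = min (int m + 1) (E (Pl i))" by simp
  qed simp
  finally show ?thesis .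
qed

lemma per_i: assumes "(e::int) \<ge> 0"
  shows "int (if e = int m then 1 else 0) + int (\<Sum>l=1..m. (l + 1) * (if e = int m - int l then 1 else 0))
         + min (int m + 1) e \<ge> int m + 1"
proof (cases "e \<ge> int m + 1")
  case True then show ?thesis by simp
next
  case False
  define l0 where "l0 = m - nat e"
  have e: "e = int m - int l0" "l0 \<le> m" using False assms unfolding l0_def by auto
  show ?thesis
  proof (cases "l0 = 0")
    case True then show ?thesis using e by simp
  next
    case l0: False
    have "(l0 + 1) * (if e = int m - int l0 then 1 else 0) \<le> (\<Sum>l=1..m. (l + 1) * (if e = int m - int l then 1 else 0))"
      by (rule member_le_sum[of l0 "{1..m}" "\<lambda>l. (l + 1) * (if e = int m - int l then 1 else 0)"]) (use e l0 in auto)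
    then have "l0 + 1 \<le> (\<Sum>l=1..m. (l + 1) * (if e = int m - int l then 1 else 0))" using e by simp
    then show ?thesis using e by linarith
  qed
qed


lemma dist_lemma:
  fixes K :: "'a::field set"
  assumes gff: "global_function_field K"
    and Pinj: "inj_on Pl {1..n}"
    and Prat: "\<forall>i\<in>{1..n}. rational_place K (Pl i)"
    and tpar: "\<forall>i\<in>{1..n}. Pl i (t i) = 1"
    and Gsupp: "\<forall>i\<in>{1..n}. G (Pl i) = 0"
    and Gprop: "\<forall>f\<in>RR_space K G - {0}.
        ((\<forall>l\<in>{1..m}. j_ell Pl n m l (zero_divisor K f)
              \<le> 2 * flx x n l + (\<Sum>\<nu>=l+1..m. flx x n \<nu>)) \<and>
         J_m Pl n m (zero_divisor K f) \<le> 2 * (\<Sum>l=1..m. (l + 1) * flx x n l))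
        \<longrightarrow> div_deg K (div_bar Pl n m (zero_divisor K f)) \<le> int s - 1"
    and f: "f \<in> RR_space K G" "Phi K Pl t n m f \<in> M_set K n m x c"
    and g: "g \<in> RR_space K G" "Phi K Pl t n m g \<in> M_set K n m x c"
    and fg: "f \<noteq> g"
  shows "int (card {i\<in>{1..n}. psi K Pl t n m f i \<noteq> psi K Pl t n m g i})
      \<ge> int ((m + 1) * n) + 1 - int s - int (2 * (\<Sum>l=1..m. (l + 1) * flx x n l))"
proof -
  have sf: "is_subfield K" using gff_sf[OF gff] .
  have RPL: "rpl K (Pl i) (t i)" if "i \<in> {1..n}" for i
    using place_facts[OF gff] Prat tpar that by blast
  have NV: "normalized_valuation K (Pl i)" if "i \<in> {1..n}" for i
    using Prat that unfolding rational_place_def by blast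
  define h where "h = f - g"
  have h0: "h \<noteq> 0" using fg unfolding h_def by simp
  have hR: "h \<in> RR_space K G" using RR_diff[OF sf f(1) g(1)] unfolding h_def .
  have VRf: "in_valring (Pl i) f" if "i \<in> {1..n}" for i using RR_VR[OF f(1)] Gsupp NV that by blast
  have VRg: "in_valring (Pl i) g" if "i \<in> {1..n}" for i using RR_VR[OF g(1)] Gsupp NV that by blast
  have VRh: "in_valring (Pl i) h" if "i \<in> {1..n}" for i using RR_VR[OF hR] Gsupp NV that by blast
  have lch: "loc_coeff K (Pl i) (t i) h k = loc_coeff K (Pl i) (t i) f k - loc_coeff K (Pl i) (t i) g k"
    if "i \<in> {1..n}" for i k
    unfolding h_def using rpl.lc_diff[OF RPL[OF that] VRf[OF that] VRg[OF that]] .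
  define E where "E = zero_divisor K h"
  have Ei: "E (Pl i) = Pl i h" "Pl i h \<ge> 0" if "i \<in> {1..n}" for i
    using NV[OF that] VRh[OF that] h0 unfolding E_def zero_divisor_def in_valring_def by auto
  define A where "A = (\<lambda>i k. Phi K Pl t n m f i k - c i k)"
  define B where "B = (\<lambda>i k. Phi K Pl t n m g i k - c i k)"
  have PhiAB: "Phi K Pl t n m h = (\<lambda>i k. A i k - B i k)"
  proof (intro ext)
    fix i k
    show "Phi K Pl t n m h i k = A i k - B i k"
    proof (cases "i \<in> {1..n} \<and> k \<in> {1..m}")
      case True then show ?thesis unfolding A_def B_def Phi_def using lch by auto
    next
      case False then show ?thesis unfolding A_def B_def Phi_def by auto
    qed
  qed
  have Iset: "I_ell n m l (Phi K Pl t n m h) = {i\<in>{1..n}. E (Pl i) = int m - int l}" if l: "l \<in> {1..m}" for l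
  proof (rule set_eqI)
    fix i
    show "i \<in> I_ell n m l (Phi K Pl t n m h) \<longleftrightarrow> i \<in> {i\<in>{1..n}. E (Pl i) = int m - int l}"
    proof (cases "i \<in> {1..n}")
      case False then show ?thesis unfolding I_ell_def by auto
    next
      case i: True
      let ?lc = "loc_coeff K (Pl i) (t i) h"
      have "i \<in> I_ell n m l (Phi K Pl t n m h) \<longleftrightarrow> (\<forall>k\<in>{l+1..m}. ?lc (m - k) = 0) \<and> ?lc (m - l) \<noteq> 0"
        unfolding I_ell_def Phi_def using i l by auto
      also have "(\<forall>k\<in>{l+1..m}. ?lc (m - k) = 0) \<longleftrightarrow> (\<forall>j<m - l. ?lc j = 0)"
      proof
        assume a: "\<forall>k\<in>{l+1..m}. ?lc (m - k) = 0"
        show "\<forall>j<m - l. ?lc j = 0"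
        proof (intro allI impI)
          fix j assume "j < m - l"
          then have "m - j \<in> {l+1..m}" "m - (m - j) = j" by auto
          then show "?lc j = 0" using a by metis
        qed
      next
        assume a: "\<forall>j<m - l. ?lc j = 0"
        show "\<forall>k\<in>{l+1..m}. ?lc (m - k) = 0"
        proof
          fix k assume "k \<in> {l+1..m}"
          then have "m - k < m - l" by auto
          then show "?lc (m - k) = 0" using a by blast
        qed
      qed
      also have "\<dots> \<and> ?lc (m - l) \<noteq> 0 \<longleftrightarrow> h \<noteq> 0 \<and> Pl i h = int (m - l)"
        using rpl.lc_iff[OF RPL[OF i] VRh[OF i]] .
      also have "\<dots> \<longleftrightarrow> E (Pl i) = int m - int l" using h0 Ei[OF i] l by auto
      finally show ?thesis using i by simp
    qed
  qed
  have jE: "j_ell Pl n m l E = card (I_ell n m l (\<lambda>i k. A i k - B i k))" if "l \<in> {1..m}" for l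
    unfolding j_ell_def Iset[OF that, unfolded PhiAB] ..
  have XA: "\<forall>l\<in>{1..m}. card (I_ell n m l A) \<le> flx x n l" using M_card[OF f(2)] unfolding A_def by blast
  have XB: "\<forall>l\<in>{1..m}. card (I_ell n m l B) \<le> flx x n l" using M_card[OF g(2)] unfolding B_def by blast
  have c1: "\<forall>l\<in>{1..m}. j_ell Pl n m l E \<le> 2 * flx x n l + (\<Sum>\<nu>=l+1..m. flx x n \<nu>)"
    using card_I_bound[OF XA XB] jE by simp
  have JmE: "J_m Pl n m E = (\<Sum>l=1..m. (l + 1) * card (I_ell n m l (\<lambda>i k. A i k - B i k)))"
    unfolding J_m_def by (rule sum.cong) (simp_all add: jE)
  have c2: "J_m Pl n m E \<le> 2 * (\<Sum>l=1..m. (l + 1) * flx x n l)"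
    unfolding JmE using J_bound[OF XA XB] .
  have deg: "div_deg K (div_bar Pl n m E) \<le> int s - 1"
    using Gprop hR h0 c1 c2 unfolding E_def by blast
  have degE: "div_deg K (div_bar Pl n m E) = (\<Sum>i=1..n. min (int m + 1) (E (Pl i)))"
    using div_deg_bar[OF Pinj Prat] .
  define z0 where "z0 i = (if E (Pl i) = int m then 1 else (0::nat))" for i
  define jl where "jl i = (\<Sum>l=1..m. (l + 1) * (if E (Pl i) = int m - int l then 1 else (0::nat)))" for i
  have "(\<Sum>i=1..n. int m + 1) \<le> (\<Sum>i=1..n. int (z0 i) + int (jl i) + min (int m + 1) (E (Pl i)))"
    by (rule sum_mono) (use per_i Ei in \<open>auto simp: z0_def jl_def\<close>)
  also have "\<dots> = int (\<Sum>i=1..n. z0 i) + int (\<Sum>i=1..n. jl i) + div_deg K (div_bar Pl n m E)"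
    unfolding degE by (simp add: sum.distrib)
  finally have tot: "int ((m + 1) * n) \<le> int (\<Sum>i=1..n. z0 i) + int (\<Sum>i=1..n. jl i) + div_deg K (div_bar Pl n m E)"
    by (simp add: algebra_simps)
  have "(\<Sum>i=1..n. jl i) = (\<Sum>l=1..m. (l + 1) * (\<Sum>i=1..n. if E (Pl i) = int m - int l then 1 else 0))"
    unfolding jl_def sum_distrib_left by (rule sum.swap)
  also have "\<dots> = J_m Pl n m E"
    unfolding J_m_def j_ell_def
    using sum.inter_filter[of "{1..n}" "\<lambda>_. 1::nat"] by simp
  finally have sjl: "(\<Sum>i=1..n. jl i) = J_m Pl n m E" .
  have "(\<Sum>i=1..n. z0 i) = card {i\<in>{1..n}. E (Pl i) = int m}"
    unfolding z0_def using sum.inter_filter[of "{1..n}" "\<lambda>_. 1::nat"] by simp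
  then have cz: "int (card {i\<in>{1..n}. E (Pl i) = int m}) \<ge> int ((m + 1) * n) + 1 - int s - int (2 * (\<Sum>l=1..m. (l + 1) * flx x n l))"
    using tot sjl deg c2 by linarith
  have "{i\<in>{1..n}. E (Pl i) = int m} \<subseteq> {i\<in>{1..n}. psi K Pl t n m f i \<noteq> psi K Pl t n m g i}"
  proof
    fix i assume "i \<in> {i\<in>{1..n}. E (Pl i) = int m}"
    then have i: "i \<in> {1..n}" "Pl i h = int m" using Ei by auto
    then have "loc_coeff K (Pl i) (t i) h m \<noteq> 0" using rpl.lc_iff[OF RPL[OF i(1)] VRh[OF i(1)], of m] h0 by simp
    then show "i \<in> {i\<in>{1..n}. psi K Pl t n m f i \<noteq> psi K Pl t n m g i}"
      using lch[OF i(1)] i(1) unfolding psi_def by auto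
  qed
  then have "card {i\<in>{1..n}. E (Pl i) = int m} \<le> card {i\<in>{1..n}. psi K Pl t n m f i \<noteq> psi K Pl t n m g i}"
    by (intro card_mono) simp_all
  then show ?thesis using cz by linarith
qed


theorem theorem2p9:
  fixes K :: "'a::field set" and q :: nat
    and Pl :: "nat \<Rightarrow> ('a \<Rightarrow> int)" and t :: "nat \<Rightarrow> 'a"
    and n m r s :: nat and x :: "nat \<Rightarrow> real"
    and G :: "('a \<Rightarrow> int) \<Rightarrow> int" and c :: "nat \<Rightarrow> nat \<Rightarrow> 'a"
    and N :: "'a set" and C :: "(nat \<Rightarrow> 'a) set"
  assumes gff: "global_function_field K" and q: "q = card K"
    and n1: "n \<ge> 1" and Pinj: "inj_on Pl {1..n}"
    and Prat: "\<forall>i\<in>{1..n}. rational_place K (Pl i)"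
    and tpar: "\<forall>i\<in>{1..n}. Pl i (t i) = 1"
    and m1: "m \<ge> 1"
    and sr: "s \<le> r"
    and xnn: "\<forall>l\<in>{1..m}. x l \<ge> 0" and xsum: "(\<Sum>l=1..m. x l) \<le> 1"
    and Vh: "card (V_set K Pl n m r s (flx x n)) < class_number K"
    and Gdiv: "is_divisor K G" and Gdeg: "div_deg K G = int r"
    and Gsupp: "\<forall>i\<in>{1..n}. G (Pl i) = 0"
    and Gprop: "\<forall>f\<in>RR_space K G - {0}.
        ((\<forall>l\<in>{1..m}. j_ell Pl n m l (zero_divisor K f)
              \<le> 2 * flx x n l + (\<Sum>\<nu>=l+1..m. flx x n \<nu>)) \<and>
         J_m Pl n m (zero_divisor K f) \<le> 2 * (\<Sum>l=1..m. (l + 1) * flx x n l))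
        \<longrightarrow> div_deg K (div_bar Pl n m (zero_divisor K f)) \<le> int s - 1"
    and big: "card (RR_space K G) * card (M_set K n m x (\<lambda>i k. 0)) > q ^ (m * n)"
    and len: "(m + 1) * n \<ge> s + 2 * (\<Sum>l=1..m. (l + 1) * flx x n l)"
    and cvec: "c \<in> vecs K n m"
    and Ndef: "N = {f\<in>RR_space K G. Phi K Pl t n m f \<in> M_set K n m x c}"
    and Nbig: "real (card N) \<ge>
        real (card (RR_space K G)) * real (card (M_set K n m x (\<lambda>i k. 0))) / real (q ^ (m * n))"
    and Cdef: "C = psi K Pl t n m ` N"
  shows "int (card C) \<ge>
           \<lceil>real (card (RR_space K G)) * real (card (M_set K n m x (\<lambda>i k. 0))) / real (q ^ (m * n))\<rceil>
         \<and> enat ((m + 1) * n + 1 - s - 2 * (\<Sum>l=1..m. (l + 1) * flx x n l)) \<le> min_dist n C"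
proof -
  have sf: "is_subfield K" using gff_sf[OF gff] .
  let ?R = "real (card (RR_space K G)) * real (card (M_set K n m x (\<lambda>i k. 0))) / real (q ^ (m * n))"
  let ?b = "(m + 1) * n + 1 - s - 2 * (\<Sum>l=1..m. (l + 1) * flx x n l)"
  have Nsub: "N \<subseteq> RR_space K G" "\<And>f. f \<in> N \<Longrightarrow> Phi K Pl t n m f \<in> M_set K n m x c"
    using Ndef by auto
  have dist: "card {i\<in>{1..n}. psi K Pl t n m f i \<noteq> psi K Pl t n m g i} \<ge> ?b"
    if "f \<in> N" "g \<in> N" "f \<noteq> g" for f g
  proof -
    have "int (card {i\<in>{1..n}. psi K Pl t n m f i \<noteq> psi K Pl t n m g i})
      \<ge> int ((m + 1) * n) + 1 - int s - int (2 * (\<Sum>l=1..m. (l + 1) * flx x n l))"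
      by (rule dist_lemma[OF gff Pinj Prat tpar Gsupp Gprop]) (use that Nsub in auto)
    then show ?thesis using len by linarith
  qed
  have b1: "?b \<ge> 1" using len by linarith
  have inj: "inj_on (psi K Pl t n m) N"
  proof (rule inj_onI, rule ccontr)
    fix f g assume fg: "f \<in> N" "g \<in> N" "psi K Pl t n m f = psi K Pl t n m g" "f \<noteq> g"
    have "card {i\<in>{1..n}. psi K Pl t n m f i \<noteq> psi K Pl t n m g i} \<ge> 1" using dist[OF fg(1,2,4)] b1 by linarith
    then show False using fg(3) by simp
  qed
  have Kfin: "finite K" using gff unfolding global_function_field_def by blast
  have "0 \<in> K" using sf0[OF sf] .
  then have q1: "q \<ge> 1" using q Kfin by (metis card_0_eq empty_iff less_one not_le)
  then have qpos: "real (q ^ (m * n)) > 0" by simp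
  have "real (q ^ (m * n)) < real (card (RR_space K G)) * real (card (M_set K n m x (\<lambda>i k. 0)))"
    using big by (metis of_nat_less_iff of_nat_mult)
  then have R1: "?R > 1" using qpos by simp
  then have "card N > 0" using Nbig by linarith
  then have Nfin: "finite N" using card_ge_0_finite by blast
  have cC: "card C = card N" unfolding Cdef using card_image[OF inj] .
  have part1: "int (card C) \<ge> \<lceil>?R\<rceil>"
    using Nbig cC by (simp add: ceiling_le_iff)
  have part2: "enat ?b \<le> min_dist n C"
    unfolding min_dist_def
  proof (rule INF_greatest)
    fix p assume "p \<in> {(u, v). u \<in> C \<and> v \<in> C \<and> u \<noteq> v}"
    then obtain f g where fg: "f \<in> N" "g \<in> N" "p = (psi K Pl t n m f, psi K Pl t n m g)"
      "psi K Pl t n m f \<noteq> psi K Pl t n m g" unfolding Cdef by auto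
    then have "f \<noteq> g" by auto
    then have "hamming n (fst p) (snd p) \<ge> ?b" using dist[OF fg(1,2)] fg(3) unfolding hamming_def by simp
    then show "enat ?b \<le> enat (hamming n (fst p) (snd p))" by simp
  qed
  show ?thesis using part1 part2 by blast
qed


end
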